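(* Let $\mathfrak g$ be a Lie algebra over a field $\mathbb{K}$ of characteristic zero. Then $|U(\mathfrak g)|=\bigoplus_{m=0}^\infty|\mathrm{Sym}^m\mathfrak g|$, i.e. $|U(\mathfrak g)|$ is the direct sum of the images $|\mathrm{Sym}^m\mathfrak g|$ of the subspaces $\mathrm{Sym}^m\mathfrak g\subset U(\mathfrak g)$.
   Context: $|U(\mathfrak g)|=U(\mathfrak g)/[U(\mathfrak g),U(\mathfrak g)]$, where $[U(\mathfrak g),U(\mathfrak g)]$ is the span of $ab-ba$, with projection $u\mapsto|u|$. $\mathrm{Sym}^m\mathfrak g$ is identified with a subspace of $U(\mathfrak g)$ via the symmetrization map $x_1\cdots x_m\mapsto\frac1{m!}\sum_{\sigma\in\mathfrak S_m}x_{\sigma(1)}\cdots x_{\sigma(m)}$, so that $U(\mathfrak g)=\bigoplus_{m\ge0}\mathrm{Sym}^m\mathfrak g$ (PBW); $|\mathrm{Sym}^m\mathfrak g|$ denotes the image of this subspace in $|U(\mathfrak g)|$. *)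

theory Defs
  imports Main "HOL.Vector_Spaces" "HOL-Combinatorics.Permutations"
begin

definition lie_algebra :: "('k::field \<Rightarrow> 'g::ab_group_add \<Rightarrow> 'g) \<Rightarrow> ('g \<Rightarrow> 'g \<Rightarrow> 'g) \<Rightarrow> bool" where
  "lie_algebra sc br \<longleftrightarrow>
     module sc \<and>
     (\<forall>x y z. br (x + y) z = br x z + br y z) \<and>
     (\<forall>x y z. br x (y + z) = br x y + br x z) \<and>
     (\<forall>c x y. br (sc c x) y = sc c (br x y)) \<and>
     (\<forall>c x y. br x (sc c y) = sc c (br x y)) \<and>
     (\<forall>x. br x x = 0) \<and>
     (\<forall>x y z. br x (br y z) + br y (br z x) + br z (br x y) = 0)"

text \<open>Elements are finitely supported functions from words ('g list) to 'k;
  the product is concatenation of words extended bilinearly.\<close>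

definition fin_supp :: "('g list \<Rightarrow> 'k::zero) set" where
  "fin_supp = {f. finite {w. f w \<noteq> 0}}"

definition fadd :: "('a \<Rightarrow> 'k::plus) \<Rightarrow> ('a \<Rightarrow> 'k) \<Rightarrow> 'a \<Rightarrow> 'k" where
  "fadd f g = (\<lambda>w. f w + g w)"

definition fsub :: "('a \<Rightarrow> 'k::minus) \<Rightarrow> ('a \<Rightarrow> 'k) \<Rightarrow> 'a \<Rightarrow> 'k" where
  "fsub f g = (\<lambda>w. f w - g w)"

definition fscale :: "'k::times \<Rightarrow> ('a \<Rightarrow> 'k) \<Rightarrow> 'a \<Rightarrow> 'k" where
  "fscale c f = (\<lambda>w. c * f w)"

definition fsum :: "('i \<Rightarrow> 'a \<Rightarrow> 'k::comm_monoid_add) \<Rightarrow> 'i set \<Rightarrow> 'a \<Rightarrow> 'k" where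
  "fsum F A = (\<lambda>w. \<Sum>i\<in>A. F i w)"

definition wd :: "'g list \<Rightarrow> 'g list \<Rightarrow> 'k::zero_neq_one" where
  "wd u = (\<lambda>v. if v = u then 1 else 0)"

definition wmult :: "('g list \<Rightarrow> 'k::comm_semiring_0) \<Rightarrow> ('g list \<Rightarrow> 'k) \<Rightarrow> 'g list \<Rightarrow> 'k" where
  "wmult a b = (\<lambda>w. \<Sum>i\<le>length w. a (take i w) * b (drop i w))"

definition fspan :: "('a \<Rightarrow> 'k::comm_semiring_0) set \<Rightarrow> ('a \<Rightarrow> 'k) set" where
  "fspan S = {f. \<exists>A c. finite A \<and> A \<subseteq> S \<and> f = fsum (\<lambda>g. fscale (c g) g) A}"

definition set_plus_f :: "('a \<Rightarrow> 'k::plus) set \<Rightarrow> ('a \<Rightarrow> 'k) set \<Rightarrow> ('a \<Rightarrow> 'k) set" where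
  "set_plus_f A B = {fadd a b | a b. a \<in> A \<and> b \<in> B}"

text \<open>Defining relations of U(g) inside the free algebra: linearity of the
  embedding of g, and  x y - y x - [x,y].\<close>
definition ue_rels :: "('k::field \<Rightarrow> 'g \<Rightarrow> 'g::ab_group_add) \<Rightarrow> ('g \<Rightarrow> 'g \<Rightarrow> 'g) \<Rightarrow> ('g list \<Rightarrow> 'k) set" where
  "ue_rels sc br =
     {fsub (fsub (wd [x + y]) (wd [x])) (wd [y]) | x y. True} \<union>
     {fsub (wd [sc c x]) (fscale c (wd [x])) | c x. True} \<union>
     {fsub (fsub (wd [x, y]) (wd [y, x])) (wd [br x y]) | x y. True}"

text \<open>the two-sided ideal generated by the relations; U(g) = fin_supp / ue_ideal\<close>
definition ue_ideal :: "('k::field \<Rightarrow> 'g \<Rightarrow> 'g::ab_group_add) \<Rightarrow> ('g \<Rightarrow> 'g \<Rightarrow> 'g) \<Rightarrow> ('g list \<Rightarrow> 'k) set" where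
  "ue_ideal sc br = fspan {wmult (wmult a r) b | a r b. a \<in> fin_supp \<and> r \<in> ue_rels sc br \<and> b \<in> fin_supp}"

definition comm_span :: "('g list \<Rightarrow> 'k::field) set" where
  "comm_span = fspan {fsub (wmult a b) (wmult b a) | a b. a \<in> fin_supp \<and> b \<in> fin_supp}"

text \<open>preimage in the free algebra of [U(g),U(g)]; |U(g)| = fin_supp / trace_kernel\<close>
definition trace_kernel :: "('k::field \<Rightarrow> 'g \<Rightarrow> 'g::ab_group_add) \<Rightarrow> ('g \<Rightarrow> 'g \<Rightarrow> 'g) \<Rightarrow> ('g list \<Rightarrow> 'k) set" where
  "trace_kernel sc br = set_plus_f (ue_ideal sc br) comm_span"

definition symz :: "'g list \<Rightarrow> 'g list \<Rightarrow> 'k::field_char_0" where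
  "symz xs = fscale (1 / fact (length xs))
      (fsum (\<lambda>\<sigma>. wd (map (\<lambda>i. xs ! \<sigma> i) [0..<length xs])) {\<sigma>. \<sigma> permutes {..<length xs}})"

text \<open>Sym^m g as a subspace of the free algebra (its image in U(g) is Sym^m g \<subseteq> U(g))\<close>
definition sym_sub :: "nat \<Rightarrow> ('g list \<Rightarrow> 'k::field_char_0) set" where
  "sym_sub m = fspan {symz xs | xs. length xs = m}"

end

theory Submission
  imports Defs
begin


lemma fadd_apply[simp]: "fadd f g w = f w + g w" by (simp add: fadd_def)
lemma fsub_apply[simp]: "fsub f g w = f w - g w" by (simp add: fsub_def)
lemma fscale_apply[simp]: "fscale c f w = c * f w" by (simp add: fscale_def)
lemma fsum_apply[simp]: "fsum F A w = (\<Sum>i\<in>A. F i w)" by (simp add: fsum_def)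
lemma wd_apply: "wd u w = (if w = u then 1 else 0)" by (simp add: wd_def)

definition subsp :: "('a \<Rightarrow> 'k::field) set \<Rightarrow> bool" where
  "subsp V \<longleftrightarrow> (\<lambda>_. 0) \<in> V \<and> (\<forall>f\<in>V. \<forall>g\<in>V. fadd f g \<in> V) \<and> (\<forall>c. \<forall>f\<in>V. fscale c f \<in> V)"

lemma subsp_zero: "subsp V \<Longrightarrow> (\<lambda>_. 0) \<in> V" by (simp add: subsp_def)
lemma subsp_add: "subsp V \<Longrightarrow> f \<in> V \<Longrightarrow> g \<in> V \<Longrightarrow> fadd f g \<in> V" by (simp add: subsp_def)
lemma subsp_scale: "subsp V \<Longrightarrow> f \<in> V \<Longrightarrow> fscale c f \<in> V" by (simp add: subsp_def)
lemma subsp_sub: "subsp V \<Longrightarrow> f \<in> V \<Longrightarrow> g \<in> V \<Longrightarrow> fsub f g \<in> V"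
proof -
  assume V: "subsp V" "f \<in> V" "g \<in> V"
  have "fsub f g = fadd f (fscale (-1) g)" by (rule ext) simp
  thus ?thesis using V subsp_add subsp_scale by metis
qed
lemma subsp_eq: "subsp V \<Longrightarrow> f \<in> V \<Longrightarrow> f = g \<Longrightarrow> g \<in> V" by simp

lemma subsp_fsum: assumes "subsp V" "finite A" "\<And>i. i \<in> A \<Longrightarrow> F i \<in> V" shows "fsum F A \<in> V"
  using assms(2,3)
proof (induction A rule: finite_induct)
  case empty
  have "fsum F {} = (\<lambda>_. 0)" by (rule ext) simp
  then show ?case using assms(1) subsp_zero by metis
next
  case (insert a A)
  have "fsum F (insert a A) = fadd (F a) (fsum F A)" by (rule ext) (simp add: insert)
  then show ?case using insert assms(1) subsp_add by (metis insertCI)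
qed

lemma fspanI: assumes "finite A" "A \<subseteq> S" "f = fsum (\<lambda>g. fscale (c g) g) A" shows "f \<in> fspan S"
  unfolding fspan_def mem_Collect_eq by (rule exI[of _ A], rule exI[of _ c]) (simp add: assms)

lemma fspan_subsp: "subsp (fspan S)"
  unfolding subsp_def
proof (intro conjI ballI allI)
  show "(\<lambda>_. 0) \<in> fspan S" unfolding fspan_def
    by (rule CollectI, rule exI[of _ "{}"], rule exI[of _ "\<lambda>_. 0"]) (auto simp: fsum_def)
next
  fix f g assume f: "f \<in> fspan S" and g: "g \<in> fspan S"
  from f obtain A c where A: "finite A" "A \<subseteq> S" "f = fsum (\<lambda>g. fscale (c g) g) A" by (auto simp: fspan_def)
  from g obtain B d where B: "finite B" "B \<subseteq> S" "g = fsum (\<lambda>g. fscale (d g) g) B" by (auto simp: fspan_def)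
  define e where "e x = (if x \<in> A then c x else 0) + (if x \<in> B then d x else 0)" for x
  have "fadd f g = fsum (\<lambda>g. fscale (e g) g) (A \<union> B)"
  proof (rule ext)
    fix w
    have 1: "(\<Sum>x\<in>A \<union> B. (if x \<in> A then c x else 0) * x w) = (\<Sum>x\<in>A. c x * x w)"
      by (rule sum.mono_neutral_cong_right) (use A B in auto)
    have 2: "(\<Sum>x\<in>A \<union> B. (if x \<in> B then d x else 0) * x w) = (\<Sum>x\<in>B. d x * x w)"
      by (rule sum.mono_neutral_cong_right) (use A B in auto)
    have "fsum (\<lambda>g. fscale (e g) g) (A \<union> B) w = (\<Sum>x\<in>A \<union> B. (if x \<in> A then c x else 0) * x w + (if x \<in> B then d x else 0) * x w)"
      unfolding fsum_apply fscale_apply e_def by (rule sum.cong) (auto simp only: distrib_right)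
    also have "\<dots> = (\<Sum>x\<in>A. c x * x w) + (\<Sum>x\<in>B. d x * x w)"
      by (simp only: sum.distrib 1 2)
    finally show "fadd f g w = fsum (\<lambda>g. fscale (e g) g) (A \<union> B) w"
      by (simp add: A B)
  qed
  then show "fadd f g \<in> fspan S" unfolding fspan_def
    by (intro CollectI exI[of _ "A \<union> B"] exI[of _ e] conjI) (use A(1,2) B(1,2) in auto)
next
  fix k f assume f: "f \<in> fspan S"
  from f obtain A c where A: "finite A" "A \<subseteq> S" "f = fsum (\<lambda>g. fscale (c g) g) A" by (auto simp: fspan_def)
  have "fscale k f = fsum (\<lambda>g. fscale (k * c g) g) A"
    by (rule ext) (simp add: A sum_distrib_left mult.assoc)
  then show "fscale k f \<in> fspan S" unfolding fspan_def
    by (intro CollectI exI[of _ A] exI[of _ "\<lambda>g. k * c g"] conjI) (use A(1,2) in auto)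
qed

lemma fspan_base: fixes f :: "'a \<Rightarrow> 'k::field" assumes "f \<in> S" shows "f \<in> fspan S"
proof -
  have "f = fsum (\<lambda>g. fscale ((\<lambda>_. 1) g) g) {f}" by (rule ext) simp
  then show ?thesis by (rule fspanI[rotated 2]) (use assms in auto)
qed

lemma fspan_min: "subsp V \<Longrightarrow> S \<subseteq> V \<Longrightarrow> fspan S \<subseteq> V"
proof
  fix f assume V: "subsp V" "S \<subseteq> V" and f: "f \<in> fspan S"
  from f obtain A c where A: "finite A" "A \<subseteq> S" "f = fsum (\<lambda>g. fscale (c g) g) A" by (auto simp: fspan_def)
  show "f \<in> V" unfolding A(3) by (rule subsp_fsum) (use V A in \<open>blast intro: subsp_scale\<close>)+
qed

lemma set_plus_f_subsp: "subsp V \<Longrightarrow> subsp W \<Longrightarrow> subsp (set_plus_f V W)"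
  unfolding subsp_def set_plus_f_def
proof (intro conjI ballI allI)
  assume V: "(\<lambda>_. 0) \<in> V \<and> (\<forall>f\<in>V. \<forall>g\<in>V. fadd f g \<in> V) \<and> (\<forall>c. \<forall>f\<in>V. fscale c f \<in> V)"
    and W: "(\<lambda>_. 0) \<in> W \<and> (\<forall>f\<in>W. \<forall>g\<in>W. fadd f g \<in> W) \<and> (\<forall>c. \<forall>f\<in>W. fscale c f \<in> W)"
  show "(\<lambda>_. 0) \<in> {fadd a b |a b. a \<in> V \<and> b \<in> W}"
    using V W by (auto intro!: exI[of _ "\<lambda>_. 0"] simp: fadd_def)
  fix f g assume "f \<in> {fadd a b |a b. a \<in> V \<and> b \<in> W}" "g \<in> {fadd a b |a b. a \<in> V \<and> b \<in> W}"
  then obtain a b a' b' where "f = fadd a b" "g = fadd a' b'" "a \<in> V" "b \<in> W" "a' \<in> V" "b' \<in> W" by blast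
  moreover have "fadd (fadd a b) (fadd a' b') = fadd (fadd a a') (fadd b b')" by (rule ext) (simp add: algebra_simps)
  ultimately show "fadd f g \<in> {fadd a b |a b. a \<in> V \<and> b \<in> W}" using V W by blast
next
  fix c f
  assume V: "(\<lambda>_. 0) \<in> V \<and> (\<forall>f\<in>V. \<forall>g\<in>V. fadd f g \<in> V) \<and> (\<forall>c. \<forall>f\<in>V. fscale c f \<in> V)"
    and W: "(\<lambda>_. 0) \<in> W \<and> (\<forall>f\<in>W. \<forall>g\<in>W. fadd f g \<in> W) \<and> (\<forall>c. \<forall>f\<in>W. fscale c f \<in> W)"
  assume "f \<in> {fadd a b |a b. a \<in> V \<and> b \<in> W}"
  then obtain a b where "f = fadd a b" "a \<in> V" "b \<in> W" by blast
  moreover have "fscale c (fadd a b) = fadd (fscale c a) (fscale c b)" by (rule ext) (simp add: algebra_simps)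
  ultimately show "fscale c f \<in> {fadd a b |a b. a \<in> V \<and> b \<in> W}" using V W by blast
qed

lemma set_plus_f_left: "subsp W \<Longrightarrow> a \<in> V \<Longrightarrow> a \<in> set_plus_f V W"
  unfolding set_plus_f_def
  by (rule CollectI, rule exI[of _ a], rule exI[of _ "\<lambda>_. 0"]) (auto simp: subsp_zero fadd_def)
lemma set_plus_f_right: "subsp V \<Longrightarrow> b \<in> W \<Longrightarrow> b \<in> set_plus_f V W"
  unfolding set_plus_f_def
  by (rule CollectI, rule exI[of _ "\<lambda>_. 0"], rule exI[of _ b]) (auto simp: subsp_zero fadd_def)


declare fadd_apply[simp del] fsub_apply[simp del] fscale_apply[simp del] fsum_apply[simp del]
lemmas fapps = fadd_apply fsub_apply fscale_apply fsum_apply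

lemma fin_supp_iff: "f \<in> fin_supp \<longleftrightarrow> finite {w. f w \<noteq> 0}" by (simp add: fin_supp_def)

lemma fin_supp_zero[simp]: "(\<lambda>_. 0::'k::zero) \<in> fin_supp" by (simp add: fin_supp_def)
lemma fin_supp_wd[simp]: "(wd u :: 'g list \<Rightarrow> 'k::zero_neq_one) \<in> fin_supp"
proof -
  have "{w. wd u w \<noteq> (0::'k)} \<subseteq> {u}" by (auto simp: wd_def)
  then show ?thesis unfolding fin_supp_def by (auto intro: finite_subset)
qed
lemma fin_supp_add[simp]: fixes f g :: "'g list \<Rightarrow> 'k::field"
  shows "f \<in> fin_supp \<Longrightarrow> g \<in> fin_supp \<Longrightarrow> fadd f g \<in> fin_supp"
proof -
  assume "f \<in> fin_supp" "g \<in> fin_supp"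
  moreover have "{w. fadd f g w \<noteq> 0} \<subseteq> {w. f w \<noteq> 0} \<union> {w. g w \<noteq> 0}" by (auto simp: fapps)
  ultimately show ?thesis unfolding fin_supp_def by (auto intro: finite_subset)
qed
lemma fin_supp_sub[simp]: fixes f g :: "'g list \<Rightarrow> 'k::field"
  shows "f \<in> fin_supp \<Longrightarrow> g \<in> fin_supp \<Longrightarrow> fsub f g \<in> fin_supp"
proof -
  assume "f \<in> fin_supp" "g \<in> fin_supp"
  moreover have "{w. fsub f g w \<noteq> 0} \<subseteq> {w. f w \<noteq> 0} \<union> {w. g w \<noteq> 0}" by (auto simp: fapps)
  ultimately show ?thesis unfolding fin_supp_def by (auto intro: finite_subset)
qed
lemma fin_supp_scale[simp]: fixes f :: "'g list \<Rightarrow> 'k::field"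
  shows "f \<in> fin_supp \<Longrightarrow> fscale c f \<in> fin_supp"
proof -
  assume "f \<in> fin_supp"
  moreover have "{w. fscale c f w \<noteq> 0} \<subseteq> {w. f w \<noteq> 0}" by (auto simp: fapps)
  ultimately show ?thesis unfolding fin_supp_def by (auto intro: finite_subset)
qed
lemma fin_supp_fsum[simp]: fixes F :: "'i \<Rightarrow> 'g list \<Rightarrow> 'k::field"
  shows "(\<And>i. i \<in> A \<Longrightarrow> F i \<in> fin_supp) \<Longrightarrow> fsum F A \<in> fin_supp"
proof (induction A rule: infinite_finite_induct)
  case (infinite A)
  then show ?case by (simp add: fsum_def)
next
  case empty
  then show ?case by (simp add: fsum_def)
next
  case (insert x A)
  have e: "fsum F (insert x A) = fadd (F x) (fsum F A)" by (rule ext) (simp add: fapps insert)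
  have "fadd (F x) (fsum F A) \<in> fin_supp" by (rule fin_supp_add) (use insert in auto)
  then show ?case by (simp only: e)
qed

lemma fin_supp_expand: fixes f :: "'g list \<Rightarrow> 'k::field" shows "f \<in> fin_supp \<Longrightarrow> f = fsum (\<lambda>v. fscale (f v) (wd v)) {v. f v \<noteq> 0}"
proof (rule ext)
  fix w assume f: "f \<in> fin_supp"
  show "f w = fsum (\<lambda>v. fscale (f v) (wd v)) {v. f v \<noteq> 0} w"
  proof (cases "f w = 0")
    case True
    have "\<forall>v\<in>{v. f v \<noteq> 0}. f v * wd v w = 0" using True by (auto simp: wd_def)
    then show ?thesis using True by (simp add: sum.neutral fapps)
  next
    case False
    have "(\<Sum>v\<in>{v. f v \<noteq> 0}. f v * wd v w) = (\<Sum>v\<in>{w}. f v * wd v w)"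
      by (rule sum.mono_neutral_right) (use f False in \<open>auto simp: fin_supp_def wd_def\<close>)
    then show ?thesis by (simp add: wd_def fapps)
  qed
qed

definition ev :: "('a \<Rightarrow> 'k::field) \<Rightarrow> ('a \<Rightarrow> 'k) \<Rightarrow> 'k" where
  "ev \<psi> f = (\<Sum>w\<in>{w. f w \<noteq> 0}. f w * \<psi> w)"

lemma ev_superset: "finite A \<Longrightarrow> {w. f w \<noteq> 0} \<subseteq> A \<Longrightarrow> ev \<psi> f = (\<Sum>w\<in>A. f w * \<psi> w)"
  unfolding ev_def by (rule sum.mono_neutral_left) auto

lemma ev_add: "f \<in> fin_supp \<Longrightarrow> g \<in> fin_supp \<Longrightarrow> ev \<psi> (fadd f g) = ev \<psi> f + ev \<psi> g"
proof -
  assume f: "f \<in> fin_supp" and g: "g \<in> fin_supp"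
  let ?A = "{w. f w \<noteq> 0} \<union> {w. g w \<noteq> 0}"
  have fin: "finite ?A" using f g by (simp add: fin_supp_def)
  have "ev \<psi> (fadd f g) = (\<Sum>w\<in>?A. fadd f g w * \<psi> w)" by (rule ev_superset[OF fin]) (auto simp: fapps)
  also have "\<dots> = (\<Sum>w\<in>?A. f w * \<psi> w) + (\<Sum>w\<in>?A. g w * \<psi> w)" by (simp add: distrib_right sum.distrib fapps)
  also have "\<dots> = ev \<psi> f + ev \<psi> g" using ev_superset[OF fin, of f \<psi>] ev_superset[OF fin, of g \<psi>] by auto
  finally show ?thesis .
qed

lemma ev_scale: "f \<in> fin_supp \<Longrightarrow> ev \<psi> (fscale c f) = c * ev \<psi> f"
proof -
  assume f: "f \<in> fin_supp"
  let ?A = "{w. f w \<noteq> 0}"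
  have fin: "finite ?A" using f by (simp add: fin_supp_def)
  have "ev \<psi> (fscale c f) = (\<Sum>w\<in>?A. fscale c f w * \<psi> w)" by (rule ev_superset[OF fin]) (auto simp: fapps)
  also have "\<dots> = c * ev \<psi> f" by (simp add: ev_def sum_distrib_left mult.assoc fapps)
  finally show ?thesis .
qed

lemma ev_sub: "f \<in> fin_supp \<Longrightarrow> g \<in> fin_supp \<Longrightarrow> ev \<psi> (fsub f g) = ev \<psi> f - ev \<psi> g"
proof -
  assume f: "f \<in> fin_supp" and g: "g \<in> fin_supp"
  have "fsub f g = fadd f (fscale (-1) g)" by (rule ext) (simp add: fapps)
  then show ?thesis using ev_add[OF f fin_supp_scale[OF g]] ev_scale[OF g] by simp
qed

lemma ev_zero[simp]: "ev \<psi> (\<lambda>_. 0) = 0" by (simp add: ev_def)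

lemma ev_wd[simp]: "ev \<psi> (wd u) = \<psi> u"
proof -
  have "ev \<psi> (wd u) = (\<Sum>w\<in>{u}. wd u w * \<psi> w)" by (rule ev_superset) (auto simp: wd_def)
  then show ?thesis by (simp add: wd_def)
qed

lemma ev_fsum: "finite A \<Longrightarrow> (\<And>i. i \<in> A \<Longrightarrow> F i \<in> fin_supp) \<Longrightarrow> ev \<psi> (fsum F A) = (\<Sum>i\<in>A. ev \<psi> (F i))"
proof (induction A rule: finite_induct)
  case empty
  have "fsum F {} = (\<lambda>_. 0)" by (rule ext) (simp add: fapps)
  then show ?case by simp
next
  case (insert x A)
  have e: "fsum F (insert x A) = fadd (F x) (fsum F A)" by (rule ext) (simp add: fapps insert)
  have "ev \<psi> (fadd (F x) (fsum F A)) = ev \<psi> (F x) + ev \<psi> (fsum F A)"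
    by (rule ev_add) (use insert.prems in auto)
  then show ?case using insert by (simp add: e)
qed

lemma ev_lin_psi:
  "ev (\<lambda>w. \<psi>1 w + \<psi>2 w) f = ev \<psi>1 f + ev \<psi>2 f"
  "ev (\<lambda>w. \<psi>1 w - \<psi>2 w) f = ev \<psi>1 f - ev \<psi>2 f"
  "ev (\<lambda>w. c * \<psi>1 w) f = c * ev \<psi>1 f"
  "ev (\<lambda>w. \<Sum>i\<in>I. \<Psi> i w) f = (\<Sum>i\<in>I. ev (\<Psi> i) f)"
  by (simp_all add: ev_def distrib_left sum.distrib right_diff_distrib sum_subtractf sum_distrib_left
     mult.left_commute sum.swap[of _ I])

lemma ev_psi_cong: "(\<And>w. f w \<noteq> 0 \<Longrightarrow> \<psi>1 w = \<psi>2 w) \<Longrightarrow> ev \<psi>1 f = ev \<psi>2 f"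
  unfolding ev_def by (rule sum.cong) auto

lemma ev_point: "f \<in> fin_supp \<Longrightarrow> f w = ev (\<lambda>w'. if w' = w then 1 else 0) f"
proof -
  assume f: "f \<in> fin_supp"
  have "ev (\<lambda>w'. if w' = w then 1 else 0) f = ev (\<lambda>w'. if w' = w then 1 else 0) (fsum (\<lambda>v. fscale (f v) (wd v)) {v. f v \<noteq> 0})"
    using fin_supp_expand[OF f] by simp
  also have "\<dots> = (\<Sum>v\<in>{v. f v \<noteq> 0}. ev (\<lambda>w'. if w' = w then 1 else 0) (fscale (f v) (wd v)))"
    by (rule ev_fsum) (use f in \<open>simp add: fin_supp_def\<close>, simp)
  also have "\<dots> = (\<Sum>v\<in>{v. f v \<noteq> 0}. f v * (if v = w then 1 else 0))"
    by (simp add: ev_scale)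
  also have "\<dots> = (\<Sum>v\<in>{v. f v \<noteq> 0}. (if v = w then f v else 0))"
    by (rule sum.cong) auto
  also have "\<dots> = f w" using f by (simp add: fin_supp_def sum.delta')
  finally show ?thesis by simp
qed

lemma fin_supp_ext: "f \<in> fin_supp \<Longrightarrow> g \<in> fin_supp \<Longrightarrow> (\<And>w. ev (\<lambda>w'. if w' = w then 1 else 0) f = ev (\<lambda>w'. if w' = w then 1 else 0) g) \<Longrightarrow> f = g"
  by (rule ext) (metis ev_point)

definition sh :: "'g list \<Rightarrow> 'g list \<Rightarrow> ('g list \<Rightarrow> 'k::zero) \<Rightarrow> 'g list \<Rightarrow> 'k" where
  "sh p q f w = (if \<exists>s. w = p @ s @ q then f (THE s. w = p @ s @ q) else 0)"

lemma sh_app[simp]: "sh p q f (p @ s @ q) = f s"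
proof -
  have "(THE s'. p @ s @ q = p @ s' @ q) = s" by (rule the_equality) auto
  then show ?thesis unfolding sh_def by auto
qed

lemma sh_out: "\<not> (\<exists>s. w = p @ s @ q) \<Longrightarrow> sh p q f w = 0"
  unfolding sh_def by auto

lemma sh_cases: obtains s where "w = p @ s @ q" "sh p q f w = f s" | "\<not> (\<exists>s. w = p @ s @ q)" "sh p q f w = 0"
  using sh_app sh_out by metis

lemma sh_add: fixes f g :: "'g list \<Rightarrow> 'k::field" and F :: "'i \<Rightarrow> 'g list \<Rightarrow> 'k" shows "sh p q (fadd f g) = fadd (sh p q f) (sh p q g)"
  by (rule ext, case_tac "\<exists>s. x = p @ s @ q", auto simp: sh_out fapps)
lemma sh_sub: fixes f g :: "'g list \<Rightarrow> 'k::field" and F :: "'i \<Rightarrow> 'g list \<Rightarrow> 'k" shows "sh p q (fsub f g) = fsub (sh p q f) (sh p q g)"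
  by (rule ext, case_tac "\<exists>s. x = p @ s @ q", auto simp: sh_out fapps)
lemma sh_scale: fixes f g :: "'g list \<Rightarrow> 'k::field" and F :: "'i \<Rightarrow> 'g list \<Rightarrow> 'k" shows "sh p q (fscale c f) = fscale c (sh p q f)"
  by (rule ext, case_tac "\<exists>s. x = p @ s @ q", auto simp: sh_out fapps)
lemma sh_fsum: fixes f g :: "'g list \<Rightarrow> 'k::field" and F :: "'i \<Rightarrow> 'g list \<Rightarrow> 'k" shows "sh p q (fsum F A) = fsum (\<lambda>i. sh p q (F i)) A"
  by (rule ext, case_tac "\<exists>s. x = p @ s @ q", auto simp: sh_out fapps)
lemma sh_zero: "sh p q (\<lambda>_. 0::'k::field) = (\<lambda>_. 0)"
  by (rule ext) (simp add: sh_def)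
lemma sh_wd: "sh p q (wd s) = wd (p @ s @ q)"
proof (rule ext)
  fix w show "sh p q (wd s) w = wd (p @ s @ q) w"
  proof (cases "\<exists>s. w = p @ s @ q")
    case True
    then obtain t where t: "w = p @ t @ q" by blast
    show ?thesis unfolding t sh_app by (simp add: wd_apply)
  next
    case False
    then have "w \<noteq> p @ s @ q" by blast
    then show ?thesis using False by (simp add: sh_out wd_apply)
  qed
qed
lemma sh_nil: "sh [] [] f = f"
  by (rule ext) (metis append.left_neutral append_Nil2 sh_app)
lemma sh_sh: "sh p' q' (sh p q f) = sh (p' @ p) (q @ q') f"
proof (rule ext)
  fix w
  show "sh p' q' (sh p q f) w = sh (p' @ p) (q @ q') f w"
  proof (cases "\<exists>s. w = p' @ p @ s @ q @ q'")
    case True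
    then obtain s where w: "w = p' @ p @ s @ q @ q'" by blast
    have w2: "w = (p' @ p) @ s @ (q @ q')" using w by simp
    have 1: "sh (p' @ p) (q @ q') f w = f s" unfolding w2 by (rule sh_app)
    have w3: "w = p' @ (p @ s @ q) @ q'" using w by simp
    have "sh p' q' (sh p q f) w = sh p q f (p @ s @ q)" unfolding w3 by (rule sh_app)
    also have "\<dots> = f s" by (rule sh_app)
    finally show ?thesis using 1 by simp
  next
    case False
    show ?thesis
    proof (cases "\<exists>s. w = p' @ s @ q'")
      case True
      then obtain s where s: "w = p' @ s @ q'" by blast
      have "\<not> (\<exists>t. s = p @ t @ q)" using False s by auto
      then show ?thesis using s False by (simp add: sh_out)
    next
      case False2: False
      then show ?thesis using False by (simp add: sh_out)
    qed
  qed
qed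

lemma fin_supp_sh[simp]: "f \<in> fin_supp \<Longrightarrow> sh p q f \<in> fin_supp"
proof -
  assume f: "f \<in> fin_supp"
  have "{w. sh p q f w \<noteq> 0} \<subseteq> (\<lambda>s. p @ s @ q) ` {s. f s \<noteq> 0}"
  proof
    fix w assume "w \<in> {w. sh p q f w \<noteq> 0}"
    then show "w \<in> (\<lambda>s. p @ s @ q) ` {s. f s \<noteq> 0}" by (cases "\<exists>s. w = p @ s @ q") (auto simp: sh_out)
  qed
  then show ?thesis using f unfolding fin_supp_def by (auto intro: finite_subset)
qed

lemma ev_sh: "f \<in> fin_supp \<Longrightarrow> ev \<psi> (sh p q f) = ev (\<lambda>s. \<psi> (p @ s @ q)) f"
proof -
  assume f: "f \<in> fin_supp"
  have eq: "{w. sh p q f w \<noteq> 0} = (\<lambda>s. p @ s @ q) ` {s. f s \<noteq> 0}"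
  proof
    show "{w. sh p q f w \<noteq> 0} \<subseteq> (\<lambda>s. p @ s @ q) ` {s. f s \<noteq> 0}"
    proof
      fix w assume "w \<in> {w. sh p q f w \<noteq> 0}"
      then show "w \<in> (\<lambda>s. p @ s @ q) ` {s. f s \<noteq> 0}" by (cases "\<exists>s. w = p @ s @ q") (auto simp: sh_out)
    qed
  qed auto
  have inj: "inj_on (\<lambda>s. p @ s @ q) {s. f s \<noteq> 0}" by (auto simp: inj_on_def)
  show ?thesis unfolding ev_def eq by (simp add: sum.reindex[OF inj])
qed

lemma wmult_left: fixes a f :: "'g list \<Rightarrow> 'k::field" assumes a: "a \<in> fin_supp"
  shows "wmult a f = fsum (\<lambda>u. fscale (a u) (sh u [] f)) {u. a u \<noteq> 0}"
proof (rule ext)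
  fix w :: "'g list"
  let ?P = "(\<lambda>i. take i w) ` {..length w}"
  have inj: "inj_on (\<lambda>i. take i w) {..length w}" by (auto simp: inj_on_def) (metis length_take min.absorb2)
  have "wmult a f w = (\<Sum>i\<le>length w. a (take i w) * f (drop (length (take i w)) w))"
    unfolding wmult_def by (rule sum.cong) auto
  also have "\<dots> = (\<Sum>u\<in>?P. a u * f (drop (length u) w))"
    by (simp add: sum.reindex[OF inj])
  also have "\<dots> = (\<Sum>u\<in>?P \<union> {u. a u \<noteq> 0}. a u * sh u [] f w)"
  proof (rule sum.mono_neutral_cong_left)
    show "finite (?P \<union> {u. a u \<noteq> 0})" using a by (simp add: fin_supp_def)
    show "?P \<subseteq> ?P \<union> {u. a u \<noteq> 0}" by auto
    show "\<forall>i\<in>?P \<union> {u. a u \<noteq> 0} - ?P. a i * sh i [] f w = 0"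
    proof
      fix u assume u: "u \<in> ?P \<union> {u. a u \<noteq> 0} - ?P"
      have "\<not> (\<exists>s. w = u @ s @ [])"
      proof
        assume "\<exists>s. w = u @ s @ []"
        then obtain s where "w = u @ s" by auto
        then have "u = take (length u) w" "length u \<le> length w" by auto
        then show False using u by auto
      qed
      then show "a u * sh u [] f w = 0" by (simp add: sh_out)
    qed
    fix u assume "u \<in> ?P"
    then obtain i where i: "i \<le> length w" "u = take i w" by auto
    then have "w = u @ drop i w @ []" by simp
    then have "sh u [] f w = f (drop i w)" by (metis sh_app)
    then show "a u * f (drop (length u) w) = a u * sh u [] f w" using i by simp
  qed
  also have "\<dots> = (\<Sum>u\<in>{u. a u \<noteq> 0}. a u * sh u [] f w)"
    by (rule sum.mono_neutral_right) (use a in \<open>auto simp: fin_supp_def\<close>)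
  finally show "wmult a f w = fsum (\<lambda>u. fscale (a u) (sh u [] f)) {u. a u \<noteq> 0} w" by (simp add: fapps)
qed

lemma wmult_right: fixes b f :: "'g list \<Rightarrow> 'k::field" assumes b: "b \<in> fin_supp"
  shows "wmult f b = fsum (\<lambda>v. fscale (b v) (sh [] v f)) {v. b v \<noteq> 0}"
proof (rule ext)
  fix w :: "'g list"
  let ?P = "(\<lambda>i. drop i w) ` {..length w}"
  have inj: "inj_on (\<lambda>i. drop i w) {..length w}" by (auto simp: inj_on_def) (metis diff_diff_cancel length_drop)
  have "wmult f b w = (\<Sum>i\<le>length w. b (drop i w) * f (take (length w - length (drop i w)) w))"
    unfolding wmult_def by (rule sum.cong) (auto simp: mult.commute)
  also have "\<dots> = (\<Sum>v\<in>?P. b v * f (take (length w - length v) w))"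
    by (simp add: sum.reindex[OF inj])
  also have "\<dots> = (\<Sum>v\<in>?P \<union> {v. b v \<noteq> 0}. b v * sh [] v f w)"
  proof (rule sum.mono_neutral_cong_left)
    show "finite (?P \<union> {v. b v \<noteq> 0})" using b by (simp add: fin_supp_def)
    show "?P \<subseteq> ?P \<union> {v. b v \<noteq> 0}" by auto
    show "\<forall>i\<in>?P \<union> {v. b v \<noteq> 0} - ?P. b i * sh [] i f w = 0"
    proof
      fix v assume v: "v \<in> ?P \<union> {v. b v \<noteq> 0} - ?P"
      have "\<not> (\<exists>s. w = [] @ s @ v)"
      proof
        assume "\<exists>s. w = [] @ s @ v"
        then obtain s where "w = s @ v" by auto
        then have "v = drop (length s) w" "length s \<le> length w" by auto
        then show False using v by auto
      qed
      then show "b v * sh [] v f w = 0" by (simp add: sh_out)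
    qed
    fix v assume "v \<in> ?P"
    then obtain i where i: "i \<le> length w" "v = drop i w" by auto
    then have "w = [] @ take i w @ v" by simp
    then have "sh [] v f w = f (take i w)" by (metis sh_app)
    then show "b v * f (take (length w - length v) w) = b v * sh [] v f w" using i by simp
  qed
  also have "\<dots> = (\<Sum>v\<in>{v. b v \<noteq> 0}. b v * sh [] v f w)"
    by (rule sum.mono_neutral_right) (use b in \<open>auto simp: fin_supp_def\<close>)
  finally show "wmult f b w = fsum (\<lambda>v. fscale (b v) (sh [] v f)) {v. b v \<noteq> 0} w" by (simp add: fapps)
qed

lemma wmult_wd_left: fixes f :: "'g list \<Rightarrow> 'k::field" shows "wmult (wd p) f = sh p [] f"
proof -
  have e: "{u. wd p u \<noteq> (0::'k)} = {p}" by (auto simp: wd_def)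
  show ?thesis by (subst wmult_left) (auto simp: fapps e wd_apply intro!: ext)
qed
lemma wmult_wd_right: fixes f :: "'g list \<Rightarrow> 'k::field" shows "wmult f (wd q) = sh [] q f"
proof -
  have e: "{u. wd q u \<noteq> (0::'k)} = {q}" by (auto simp: wd_def)
  show ?thesis by (subst wmult_right) (auto simp: fapps e wd_apply intro!: ext)
qed

lemma wmult_expand: fixes a b :: "'g list \<Rightarrow> 'k::field" assumes a: "a \<in> fin_supp" and b: "b \<in> fin_supp"
  shows "wmult a b = fsum (\<lambda>u. fscale (a u) (fsum (\<lambda>v. fscale (b v) (wd (u @ v))) {v. b v \<noteq> 0})) {u. a u \<noteq> 0}"
proof -
  have "sh u [] b = fsum (\<lambda>v. fscale (b v) (wd (u @ v))) {v. b v \<noteq> 0}" for u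
    by (subst fin_supp_expand[OF b]) (simp add: sh_fsum sh_scale sh_wd)
  then show ?thesis by (simp add: wmult_left[OF a])
qed


definition Igen :: "('k::field \<Rightarrow> 'g \<Rightarrow> 'g::ab_group_add) \<Rightarrow> ('g \<Rightarrow> 'g \<Rightarrow> 'g) \<Rightarrow> ('g list \<Rightarrow> 'k) set" where
  "Igen sc br = {sh p q r | p q r. r \<in> ue_rels sc br}"

lemma rels_fin: "r \<in> ue_rels sc br \<Longrightarrow> r \<in> fin_supp"
  unfolding ue_rels_def by auto

lemma ideal_subsp: "subsp (ue_ideal sc br)"
  unfolding ue_ideal_def by (rule fspan_subsp)

lemma ideal_gen: assumes "a \<in> fin_supp" "r \<in> ue_rels sc br" "b \<in> fin_supp"
  shows "wmult (wmult a r) b \<in> ue_ideal sc br"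
  unfolding ue_ideal_def by (rule fspan_base) (use assms in blast)

lemma Igen_in_ideal: "Igen sc br \<subseteq> ue_ideal sc br"
proof
  fix f assume "f \<in> Igen sc br"
  then obtain p q r where f: "f = sh p q r" and r: "r \<in> ue_rels sc br" unfolding Igen_def by blast
  have "f = wmult (wmult (wd p) r) (wd q)" by (simp add: f wmult_wd_left wmult_wd_right sh_sh)
  then show "f \<in> ue_ideal sc br" using ideal_gen[OF fin_supp_wd r fin_supp_wd] by simp
qed

lemma ideal_in_Igen: "ue_ideal sc br \<subseteq> fspan (Igen sc br)"
  unfolding ue_ideal_def
proof (rule fspan_min[OF fspan_subsp], rule subsetI)
  fix g assume "g \<in> {wmult (wmult a r) b |a r b. a \<in> fin_supp \<and> r \<in> ue_rels sc br \<and> b \<in> fin_supp}"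
  then obtain a r b where g: "g = wmult (wmult a r) b" and a: "a \<in> fin_supp" and r: "r \<in> ue_rels sc br" and b: "b \<in> fin_supp"
    by blast
  have rf: "r \<in> fin_supp" using r by (rule rels_fin)
  have "g = fsum (\<lambda>v. fscale (b v) (sh [] v (wmult a r))) {v. b v \<noteq> 0}"
    unfolding g by (rule wmult_right[OF b])
  also have "\<dots> = fsum (\<lambda>v. fscale (b v) (fsum (\<lambda>u. fscale (a u) (sh u v r)) {u. a u \<noteq> 0})) {v. b v \<noteq> 0}"
    by (simp add: wmult_left[OF a] sh_fsum sh_scale sh_sh)
  finally have geq: "g = \<dots>" .
  have fin: "finite {v. b v \<noteq> 0}" "finite {u. a u \<noteq> 0}" using a b by (auto simp: fin_supp_def)
  have "sh u v r \<in> fspan (Igen sc br)" for u v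
    by (rule fspan_base) (use r in \<open>auto simp: Igen_def\<close>)
  then show "g \<in> fspan (Igen sc br)" unfolding geq
    by (intro subsp_fsum[OF fspan_subsp] subsp_scale[OF fspan_subsp] fin)
qed

lemma ideal_eq: "ue_ideal sc br = fspan (Igen sc br)"
  using ideal_in_Igen fspan_min[OF ideal_subsp Igen_in_ideal] by blast

lemma ideal_sh: assumes "f \<in> ue_ideal sc br" shows "sh p q f \<in> ue_ideal sc br"
proof -
  let ?V = "{f. sh p q f \<in> fspan (Igen sc br)}"
  have V: "subsp ?V" unfolding subsp_def
    by (simp add: sh_zero sh_add sh_scale subsp_zero[OF fspan_subsp] subsp_add[OF fspan_subsp] subsp_scale[OF fspan_subsp])
  have "Igen sc br \<subseteq> ?V"
  proof
    fix g assume "g \<in> Igen sc br"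
    then obtain p' q' r where g: "g = sh p' q' r" and r: "r \<in> ue_rels sc br" unfolding Igen_def by blast
    have "sh p q g = sh (p @ p') (q' @ q) r" by (simp add: g sh_sh)
    then show "g \<in> ?V" using r by (auto intro!: fspan_base simp: Igen_def)
  qed
  then have "fspan (Igen sc br) \<subseteq> ?V" by (rule fspan_min[OF V])
  then show ?thesis using assms ideal_eq by blast
qed

lemma ideal_rel_sh: "r \<in> ue_rels sc br \<Longrightarrow> sh p q r \<in> ue_ideal sc br"
  using Igen_in_ideal unfolding Igen_def by blast

lemma I_add: "fsub (fsub (wd (p @ [x + y] @ q)) (wd (p @ [x] @ q))) (wd (p @ [y] @ q)) \<in> ue_ideal sc br"
proof -
  have "fsub (fsub (wd [x + y]) (wd [x])) (wd [y]) \<in> ue_rels sc br" unfolding ue_rels_def by blast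
  from ideal_rel_sh[OF this, of p q] show ?thesis by (simp add: sh_sub sh_wd)
qed

lemma I_scale: "fsub (wd (p @ [sc c x] @ q)) (fscale c (wd (p @ [x] @ q))) \<in> ue_ideal sc br"
proof -
  have "fsub (wd [sc c x]) (fscale c (wd [x])) \<in> ue_rels sc br" unfolding ue_rels_def by blast
  from ideal_rel_sh[OF this, of p q] show ?thesis by (simp add: sh_sub sh_wd sh_scale)
qed

lemma I_br: "fsub (fsub (wd (p @ [x, y] @ q)) (wd (p @ [y, x] @ q))) (wd (p @ [br x y] @ q)) \<in> ue_ideal sc br"
proof -
  have "fsub (fsub (wd [x, y]) (wd [y, x])) (wd [br x y]) \<in> ue_rels sc br" unfolding ue_rels_def by blast
  from ideal_rel_sh[OF this, of p q] show ?thesis by (simp add: sh_sub sh_wd)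
qed

lemma comm_subsp: "subsp comm_span"
  unfolding comm_span_def by (rule fspan_subsp)

lemma TK_subsp: "subsp (trace_kernel sc br)"
  unfolding trace_kernel_def by (rule set_plus_f_subsp[OF ideal_subsp comm_subsp])

lemma I_TK: "f \<in> ue_ideal sc br \<Longrightarrow> f \<in> trace_kernel sc br"
  unfolding trace_kernel_def by (rule set_plus_f_left[OF comm_subsp])

lemma C_TK: "f \<in> comm_span \<Longrightarrow> f \<in> trace_kernel sc br"
  unfolding trace_kernel_def by (rule set_plus_f_right[OF ideal_subsp])


definition noinv :: "('g \<Rightarrow> 'g \<Rightarrow> bool) \<Rightarrow> 'g list \<Rightarrow> bool" where
  "noinv lt xs \<longleftrightarrow> (\<forall>i. Suc i < length xs \<longrightarrow> \<not> lt (xs ! Suc i) (xs ! i))"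
definition fi :: "('g \<Rightarrow> 'g \<Rightarrow> bool) \<Rightarrow> 'g list \<Rightarrow> nat" where
  "fi lt xs = (LEAST i. Suc i < length xs \<and> lt (xs ! Suc i) (xs ! i))"
definition swp :: "nat \<Rightarrow> 'g list \<Rightarrow> 'g list" where
  "swp i w = take i w @ w ! Suc i # w ! i # drop (Suc (Suc i)) w"
definition invs :: "('g \<Rightarrow> 'g \<Rightarrow> bool) \<Rightarrow> 'g list \<Rightarrow> (nat \<times> nat) set" where
  "invs lt w = {(i, j). i < j \<and> j < length w \<and> lt (w ! j) (w ! i)}"
definition ninv :: "('g \<Rightarrow> 'g \<Rightarrow> bool) \<Rightarrow> 'g list \<Rightarrow> nat" where
  "ninv lt w = card (invs lt w)"

lemma invs_finite: "finite (invs lt w)"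
proof -
  have "invs lt w \<subseteq> {..<length w} \<times> {..<length w}" by (auto simp: invs_def)
  then show ?thesis by (rule finite_subset) auto
qed

lemma ninv_swap:
  assumes ba: "lt b a" and ab: "\<not> lt a b"
  shows "ninv lt (u @ a # b # v) = Suc (ninv lt (u @ b # a # v))"
proof -
  define n where "n = length u"
  define w where "w = u @ a # b # v"
  define w' where "w' = u @ b # a # v"
  define \<tau> where "\<tau> k = (if k = n then Suc n else if k = Suc n then n else k)" for k
  define \<phi> where "\<phi> p = (\<tau> (fst p), \<tau> (snd p))" for p
  have len: "length w' = length w" by (simp add: w_def w'_def)
  have nth: "w' ! k = w ! \<tau> k" for k
  proof -
    consider "k < n" | "k = n" | "k = Suc n" | "k > Suc n" by linarith
    then show ?thesis
    proof cases
      case 1 then show ?thesis by (simp add: w_def w'_def \<tau>_def n_def nth_append)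
    next
      case 2 then show ?thesis by (simp add: w_def w'_def \<tau>_def n_def nth_append)
    next
      case 3 then show ?thesis by (simp add: w_def w'_def \<tau>_def n_def nth_append)
    next
      case 4
      then obtain m where m: "k = Suc (Suc n) + m" by (metis add_Suc less_iff_Suc_add)
      then show ?thesis by (simp add: w_def w'_def \<tau>_def n_def nth_append)
    qed
  qed
  have \<tau>\<tau>: "\<tau> (\<tau> k) = k" for k by (simp add: \<tau>_def)
  have \<tau>len: "k < length w \<Longrightarrow> \<tau> k < length w" for k by (auto simp: \<tau>_def w_def n_def)
  have \<tau>ord: "i < j \<Longrightarrow> (i, j) \<noteq> (n, Suc n) \<Longrightarrow> \<tau> i < \<tau> j" for i j
    by (auto simp: \<tau>_def)
  have nn: "(n, Suc n) \<in> invs lt w" using ba by (simp add: invs_def w_def n_def nth_append)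
  have nn': "(n, Suc n) \<notin> invs lt w'" using ab by (simp add: invs_def w'_def n_def nth_append)
  have img: "invs lt w = insert (n, Suc n) (\<phi> ` invs lt w')"
  proof (rule set_eqI, rule iffI)
    fix p assume p: "p \<in> invs lt w"
    show "p \<in> insert (n, Suc n) (\<phi> ` invs lt w')"
    proof (cases "p = (n, Suc n)")
      case False
      obtain i j where ij: "p = (i, j)" by (cases p)
      have "i < j" "j < length w" "lt (w ! j) (w ! i)" using p ij by (auto simp: invs_def)
      then have "(\<tau> i, \<tau> j) \<in> invs lt w'" using \<tau>ord[of i j] False ij \<tau>len
        by (auto simp: invs_def len nth \<tau>\<tau>)
      moreover have "\<phi> (\<tau> i, \<tau> j) = p" by (simp add: \<phi>_def ij \<tau>\<tau>)
      ultimately show ?thesis by (metis imageI insertI2)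
    qed simp
  next
    fix p assume p: "p \<in> insert (n, Suc n) (\<phi> ` invs lt w')"
    show "p \<in> invs lt w"
    proof (cases "p = (n, Suc n)")
      case True then show ?thesis using nn by simp
    next
      case False
      then obtain q where q: "q \<in> invs lt w'" "p = \<phi> q" using p by auto
      obtain i j where qij: "q = (i, j)" by (cases q)
      have ij: "(i, j) \<in> invs lt w'" "p = (\<tau> i, \<tau> j)" using q qij by (auto simp: \<phi>_def)
      have "i < j" "j < length w" "lt (w' ! j) (w' ! i)" using ij(1) by (auto simp: invs_def len)
      moreover have "(i, j) \<noteq> (n, Suc n)" using ij(1) nn' by auto
      ultimately show ?thesis using \<tau>ord[of i j] ij(2) \<tau>len by (auto simp: invs_def nth)
    qed
  qed
  have inj: "inj_on \<phi> (invs lt w')" by (rule inj_onI) (metis \<phi>_def \<tau>\<tau> prod.collapse fst_conv snd_conv)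
  have notin: "(n, Suc n) \<notin> \<phi> ` invs lt w'"
  proof
    assume "(n, Suc n) \<in> \<phi> ` invs lt w'"
    then obtain p where "p \<in> invs lt w'" "\<phi> p = (n, Suc n)" by auto
    then have "\<tau> (fst p) = n" "\<tau> (snd p) = Suc n" by (auto simp: \<phi>_def)
    then have "fst p = Suc n" "snd p = n" by (metis \<tau>\<tau> \<tau>_def)+
    then show False using \<open>p \<in> invs lt w'\<close> by (auto simp: invs_def)
  qed
  have "ninv lt w = Suc (card (\<phi> ` invs lt w'))"
    unfolding ninv_def img by (rule card_insert_disjoint) (use invs_finite notin in auto)
  also have "card (\<phi> ` invs lt w') = ninv lt w'" unfolding ninv_def by (rule card_image[OF inj])
  finally show ?thesis by (simp add: w_def w'_def)
qed

lemma not_noinv_fi: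
  assumes "\<not> noinv lt w"
  shows "Suc (fi lt w) < length w" "lt (w ! Suc (fi lt w)) (w ! fi lt w)"
    "\<And>i. i < fi lt w \<Longrightarrow> \<not> lt (w ! Suc i) (w ! i)"
proof -
  obtain i where i: "Suc i < length w \<and> lt (w ! Suc i) (w ! i)" using assms by (auto simp: noinv_def)
  show "Suc (fi lt w) < length w" "lt (w ! Suc (fi lt w)) (w ! fi lt w)"
    unfolding fi_def using LeastI[of "\<lambda>i. Suc i < length w \<and> lt (w ! Suc i) (w ! i)", OF i] by auto
  fix j assume j: "j < fi lt w"
  show "\<not> lt (w ! Suc j) (w ! j)"
  proof
    assume "lt (w ! Suc j) (w ! j)"
    moreover have "Suc j < length w" using j \<open>Suc (fi lt w) < length w\<close> by simp
    ultimately have "fi lt w \<le> j" unfolding fi_def by (intro Least_le) simp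
    then show False using j by simp
  qed
qed

lemma swp_decomp: "Suc i < length w \<Longrightarrow> w = take i w @ w ! i # w ! Suc i # drop (Suc (Suc i)) w"
  by (metis Cons_nth_drop_Suc Suc_lessD append_take_drop_id)

lemma swp_length: "Suc i < length w \<Longrightarrow> length (swp i w) = length w"
  by (simp add: swp_def)

locale pbw =
  fixes sc :: "'k::field_char_0 \<Rightarrow> 'g::ab_group_add \<Rightarrow> 'g"
    and br :: "'g \<Rightarrow> 'g \<Rightarrow> 'g"
    and B :: "'g set"
    and lt :: "'g \<Rightarrow> 'g \<Rightarrow> bool"
  assumes lie: "lie_algebra sc br"
    and indep: "\<not> module.dependent sc B"
    and spanB: "module.span sc B = UNIV"
    and lt_irrefl: "\<not> lt a a"
    and lt_trans: "lt a b \<Longrightarrow> lt b c \<Longrightarrow> lt a c"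
    and lt_total: "a \<noteq> b \<Longrightarrow> lt a b \<or> lt b a"
begin

lemma lt_asym: "lt a b \<Longrightarrow> \<not> lt b a"
  using lt_irrefl lt_trans by blast

lemma ninv_swap': "lt b a \<Longrightarrow> ninv lt (u @ a # b # v) = Suc (ninv lt (u @ b # a # v))"
  by (rule ninv_swap) (auto dest: lt_asym)

lemma swp_ninv:
  assumes "\<not> noinv lt w"
  shows "ninv lt (swp (fi lt w) w) < ninv lt w"
proof -
  let ?i = "fi lt w"
  have w: "w = take ?i w @ w ! ?i # w ! Suc ?i # drop (Suc (Suc ?i)) w"
    using not_noinv_fi(1)[OF assms] by (rule swp_decomp)
  have "ninv lt w = Suc (ninv lt (swp ?i w))"
    using ninv_swap'[OF not_noinv_fi(2)[OF assms], of "take ?i w" "drop (Suc (Suc ?i)) w"]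
    unfolding swp_def using w by simp
  then show ?thesis by simp
qed

function N :: "'g multiset \<Rightarrow> 'g list \<Rightarrow> 'k" where
  "N M w = (if noinv lt w then (if mset w = M then 1 else 0)
     else N M (swp (fi lt w) w) +
       (\<Sum>e\<in>{e. module.representation sc B (br (w ! fi lt w) (w ! Suc (fi lt w))) e \<noteq> 0}.
          module.representation sc B (br (w ! fi lt w) (w ! Suc (fi lt w))) e *
          N M (take (fi lt w) w @ e # drop (Suc (Suc (fi lt w))) w)))"
  by auto
termination
proof (relation "measures [\<lambda>(M, w). length w, \<lambda>(M, w). ninv lt w]")
  show "wf (measures [\<lambda>(M, w). length w, \<lambda>(M, w). ninv lt w])" by simp
next
  fix M w assume a: "\<not> noinv lt w"
  show "((M, swp (fi lt w) w), M, w) \<in> measures [\<lambda>(M, w). length w, \<lambda>(M, w). ninv lt w]"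
    using swp_length[OF not_noinv_fi(1)[OF a]] swp_ninv[OF a] by simp
next
  fix M w e assume a: "\<not> noinv lt w"
  show "((M, take (fi lt w) w @ e # drop (Suc (Suc (fi lt w))) w), M, w) \<in> measures [\<lambda>(M, w). length w, \<lambda>(M, w). ninv lt w]"
  proof -
    have "Suc (length w - 2) < length w" using not_noinv_fi(1)[OF a] by linarith
    then show ?thesis using not_noinv_fi(1)[OF a] by simp
  qed
qed

declare N.simps[simp del]

end


lemma first_inv:
  assumes "\<not> noinv lt xs"
  obtains u1 c d r where "xs = u1 @ c # d # r" "lt d c" "noinv lt (u1 @ [c])"
proof -
  let ?i = "fi lt xs"
  have xs: "xs = take ?i xs @ xs ! ?i # xs ! Suc ?i # drop (Suc (Suc ?i)) xs"
    using not_noinv_fi(1)[OF assms] by (rule swp_decomp)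
  have "noinv lt (take ?i xs @ [xs ! ?i])"
    unfolding noinv_def
  proof (intro allI impI)
    fix j assume j: "Suc j < length (take ?i xs @ [xs ! ?i])"
    then have j': "j < ?i" "Suc ?i < length xs" using not_noinv_fi(1)[OF assms] by auto
    have "(take ?i xs @ [xs ! ?i]) ! j = xs ! j" using j' by (simp add: nth_append)
    moreover have "(take ?i xs @ [xs ! ?i]) ! Suc j = xs ! Suc j" using j' by (cases "Suc j = ?i") (auto simp: nth_append)
    ultimately show "\<not> lt ((take ?i xs @ [xs ! ?i]) ! Suc j) ((take ?i xs @ [xs ! ?i]) ! j)"
      using not_noinv_fi(3)[OF assms j'(1)] by simp
  qed
  then show ?thesis using that xs not_noinv_fi(2)[OF assms] by blast
qed

context pbw
begin

lemma modl: "module sc" using lie by (simp add: lie_algebra_def)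

abbreviation cf :: "'g \<Rightarrow> 'g \<Rightarrow> 'k" where "cf x \<equiv> module.representation sc B x"
abbreviation sp :: "'g \<Rightarrow> 'g set" where "sp x \<equiv> {e. cf x e \<noteq> 0}"

lemma inspan: "x \<in> module.span sc B" using spanB by simp

lemma sp_fin[simp]: "finite (sp x)" by (rule module.finite_representation[OF modl])
lemma cf_add: "cf (x + y) = (\<lambda>e. cf x e + cf y e)"
  by (rule module.representation_add[OF modl indep inspan inspan])
lemma cf_diff: "cf (x - y) = (\<lambda>e. cf x e - cf y e)"
  by (rule module.representation_diff[OF modl indep inspan inspan])
lemma cf_neg: "cf (- x) = (\<lambda>e. - cf x e)"
  by (rule module.representation_neg[OF modl indep inspan])
lemma cf_scale: "cf (sc c x) = (\<lambda>e. c * cf x e)"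
  by (rule module.representation_scale[OF modl indep inspan])
lemma cf_zero: "cf 0 = (\<lambda>e. 0)"
  by (rule module.representation_zero[OF modl])
lemma cf_sum: "cf (sum f A) = (\<lambda>e. \<Sum>i\<in>A. cf (f i) e)"
  by (rule module.representation_sum[OF modl indep inspan])
lemma cf_expand: "(\<Sum>e\<in>sp x. sc (cf x e) e) = x"
  by (rule module.sum_nonzero_representation_eq[OF modl indep inspan])

lemma br_add_l: "br (x + y) z = br x z + br y z" using lie by (simp add: lie_algebra_def)
lemma br_add_r: "br x (y + z) = br x y + br x z" using lie by (simp add: lie_algebra_def)
lemma br_scale_l: "br (sc c x) y = sc c (br x y)" using lie by (simp add: lie_algebra_def)
lemma br_scale_r: "br x (sc c y) = sc c (br x y)" using lie by (simp add: lie_algebra_def)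
lemma br_alt: "br x x = 0" using lie by (simp add: lie_algebra_def)
lemma jacobi: "br x (br y z) + br y (br z x) + br z (br x y) = 0" using lie by (simp add: lie_algebra_def)
lemma br_zero_l: "br 0 z = 0" using br_add_l[of 0 0 z] by simp
lemma br_zero_r: "br z 0 = 0" using br_add_r[of z 0 0] by simp
lemma br_anti: "br y x = - br x y"
proof -
  have "0 = br (x + y) (x + y)" by (rule br_alt[symmetric])
  also have "\<dots> = (br x x + br x y) + (br y x + br y y)" by (simp add: br_add_l br_add_r ac_simps)
  also have "\<dots> = br x y + br y x" by (simp only: br_alt add_0_left add_0_right)
  finally have "br x y + br y x = 0" by simp
  then show ?thesis by (simp add: eq_neg_iff_add_eq_0 add.commute)
qed
lemma br_sum_l: "br (sum f A) y = (\<Sum>i\<in>A. br (f i) y)"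
  by (induction A rule: infinite_finite_induct) (auto simp: br_zero_l br_add_l)
lemma br_sum_r: "br y (sum f A) = (\<Sum>i\<in>A. br y (f i))"
  by (induction A rule: infinite_finite_induct) (auto simp: br_zero_r br_add_r)

lemma cf_br_l: "cf (br X y) g = (\<Sum>e\<in>sp X. cf X e * cf (br e y) g)"
proof -
  have "br X y = (\<Sum>e\<in>sp X. sc (cf X e) (br e y))"
    by (subst cf_expand[symmetric, of X]) (simp add: br_sum_l br_scale_l)
  then show ?thesis by (simp add: cf_sum cf_scale)
qed
lemma cf_br_r: "cf (br y X) g = (\<Sum>e\<in>sp X. cf X e * cf (br y e) g)"
proof -
  have "br y X = (\<Sum>e\<in>sp X. sc (cf X e) (br y e))"
    by (subst cf_expand[symmetric, of X]) (simp add: br_sum_r br_scale_r)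
  then show ?thesis by (simp add: cf_sum cf_scale)
qed

lemma sum_sp: "finite A \<Longrightarrow> sp x \<subseteq> A \<Longrightarrow> (\<Sum>e\<in>A. cf x e * h e) = (\<Sum>e\<in>sp x. cf x e * h e)"
  by (rule sum.mono_neutral_right) auto

definition Lw :: "'g multiset \<Rightarrow> 'g list \<Rightarrow> 'g \<Rightarrow> 'g list \<Rightarrow> 'k" where
  "Lw M u X v = (\<Sum>e\<in>sp X. cf X e * N M (u @ e # v))"

lemma Lw_super: "finite A \<Longrightarrow> sp X \<subseteq> A \<Longrightarrow> Lw M u X v = (\<Sum>e\<in>A. cf X e * N M (u @ e # v))"
  unfolding Lw_def by (rule sum_sp[symmetric])

lemma Lw_add: "Lw M u (X + Y) v = Lw M u X v + Lw M u Y v"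
proof -
  let ?A = "sp X \<union> sp Y \<union> sp (X + Y)"
  have "Lw M u (X + Y) v = (\<Sum>e\<in>?A. cf (X + Y) e * N M (u @ e # v))" by (rule Lw_super) auto
  also have "\<dots> = (\<Sum>e\<in>?A. cf X e * N M (u @ e # v)) + (\<Sum>e\<in>?A. cf Y e * N M (u @ e # v))"
    by (simp add: cf_add distrib_right sum.distrib)
  also have "\<dots> = Lw M u X v + Lw M u Y v"
  proof -
    have "Lw M u X v = (\<Sum>e\<in>?A. cf X e * N M (u @ e # v))" by (rule Lw_super) auto
    moreover have "Lw M u Y v = (\<Sum>e\<in>?A. cf Y e * N M (u @ e # v))" by (rule Lw_super) auto
    ultimately show ?thesis by simp
  qed
  finally show ?thesis .
qed

lemma Lw_scale: "Lw M u (sc c X) v = c * Lw M u X v"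
proof -
  let ?A = "sp X \<union> sp (sc c X)"
  have "Lw M u (sc c X) v = (\<Sum>e\<in>?A. cf (sc c X) e * N M (u @ e # v))" by (rule Lw_super) auto
  also have "\<dots> = c * (\<Sum>e\<in>?A. cf X e * N M (u @ e # v))"
    by (simp add: cf_scale sum_distrib_left mult.assoc)
  also have "\<dots> = c * Lw M u X v"
  proof -
    have "Lw M u X v = (\<Sum>e\<in>?A. cf X e * N M (u @ e # v))" by (rule Lw_super) auto
    then show ?thesis by simp
  qed
  finally show ?thesis .
qed

lemma Lw_zero: "Lw M u 0 v = 0" by (simp add: Lw_def cf_zero)

lemma Lw_neg: "Lw M u (- X) v = - Lw M u X v"
  using Lw_add[of M u X "- X" v] by (simp add: Lw_zero eq_neg_iff_add_eq_0 add.commute)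

lemma Lw_diff: "Lw M u (X - Y) v = Lw M u X v - Lw M u Y v"
  using Lw_add[of M u X "- Y" v] Lw_neg[of M u Y v] by simp

lemma N_noinv: "noinv lt w \<Longrightarrow> N M w = (if mset w = M then 1 else 0)"
  by (simp add: N.simps)

lemma N_unfold:
  assumes ba: "lt b a" and ni: "noinv lt (u @ [a])"
  shows "N M (u @ a # b # v) = N M (u @ b # a # v) + Lw M u (br a b) v"
proof -
  let ?w = "u @ a # b # v"
  have w1: "?w ! length u = a" "?w ! Suc (length u) = b" by (simp_all add: nth_append)
  have hasinv: "\<not> noinv lt ?w" unfolding noinv_def using ba w1 by (auto intro!: exI[of _ "length u"])
  have fi: "fi lt ?w = length u"
    unfolding fi_def
  proof (rule Least_equality)
    show "Suc (length u) < length ?w \<and> lt (?w ! Suc (length u)) (?w ! length u)" using ba w1 by simp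
    fix j assume j: "Suc j < length ?w \<and> lt (?w ! Suc j) (?w ! j)"
    show "length u \<le> j"
    proof (rule ccontr)
      assume "\<not> length u \<le> j"
      then have jl: "j < length u" by simp
      have "?w ! j = (u @ [a]) ! j" "?w ! Suc j = (u @ [a]) ! Suc j" using jl by (auto simp: nth_append)
      then show False using ni j jl unfolding noinv_def by auto
    qed
  qed
  have swp: "swp (length u) ?w = u @ b # a # v" by (simp add: swp_def nth_append)
  have tk: "take (length u) ?w = u" "drop (Suc (Suc (length u))) ?w = v" by simp_all
  show ?thesis
    by (subst N.simps) (simp only: hasinv fi w1 swp tk if_False Lw_def)
qed

lemma N_top: "length w \<le> size M \<Longrightarrow> N M w = (if mset w = M then 1 else 0)"
proof (induction M w rule: N.induct)
  case (1 M w)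
  show ?case
  proof (cases "noinv lt w")
    case True
    then show ?thesis by (simp add: N_noinv)
  next
    case False
    let ?i = "fi lt w"
    have il: "Suc ?i < length w" by (rule not_noinv_fi(1)[OF False])
    have ms: "mset (swp ?i w) = mset w"
      by (subst (2) swp_decomp[OF il]) (simp add: swp_def)
    have 1: "N M (swp ?i w) = (if mset w = M then 1 else 0)"
      using "1.IH"(1)[OF False] "1.prems" swp_length[OF il] ms by simp
    have 2: "N M (take ?i w @ e # drop (Suc (Suc ?i)) w) = 0" if ee: "cf (br (w ! ?i) (w ! Suc ?i)) e \<noteq> 0" for e
    proof -
      have len: "length (take ?i w @ e # drop (Suc (Suc ?i)) w) < size M" using il "1.prems" by simp
      then have "mset (take ?i w @ e # drop (Suc (Suc ?i)) w) \<noteq> M"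
        by (metis less_irrefl size_mset)
      then show ?thesis using "1.IH"(2)[OF False, of e] ee len by (auto simp del: size_mset)
    qed
    have 3: "(\<Sum>e\<in>sp (br (w ! ?i) (w ! Suc ?i)). cf (br (w ! ?i) (w ! Suc ?i)) e * N M (take ?i w @ e # drop (Suc (Suc ?i)) w)) = 0"
      by (rule sum.neutral) (simp add: 2)
    show ?thesis by (subst N.simps) (simp only: False 1 3 if_False add_0_right)
  qed
qed

end


context pbw
begin

definition Kn :: "'g multiset \<Rightarrow> nat \<Rightarrow> bool" where
  "Kn M n \<longleftrightarrow> (\<forall>u a b v. length u + length v + 2 = n \<longrightarrow>
      N M (u @ a # b # v) - N M (u @ b # a # v) = Lw M u (br a b) v)"

lemma KnD: "Kn M n \<Longrightarrow> length u + length v + 2 = n \<Longrightarrow> N M (u @ a # b # v) - N M (u @ b # a # v) = Lw M u (br a b) v"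
  unfolding Kn_def by blast

lemma Lw_minus: "Lw M u X v - Lw M u' X v' = (\<Sum>e\<in>sp X. cf X e * (N M (u @ e # v) - N M (u' @ e # v')))"
  by (simp add: Lw_def sum_subtractf right_diff_distrib)

lemma Xlem:
  assumes K: "Kn M (length u + length v + 2)"
  shows "Lw M u X (y # v) - Lw M (u @ [y]) X v = Lw M u (br X y) v"
proof -
  define G where "G = sp (br X y) \<union> (\<Union>e\<in>sp X. sp (br e y))"
  have Gfin: "finite G" by (simp add: G_def)
  have "Lw M u X (y # v) - Lw M (u @ [y]) X v = (\<Sum>e\<in>sp X. cf X e * (N M (u @ e # y # v) - N M (u @ y # e # v)))"
    by (simp add: Lw_minus)
  also have "\<dots> = (\<Sum>e\<in>sp X. cf X e * Lw M u (br e y) v)"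
    by (rule sum.cong) (simp_all add: KnD[OF K])
  also have "\<dots> = (\<Sum>e\<in>sp X. cf X e * (\<Sum>g\<in>G. cf (br e y) g * N M (u @ g # v)))"
    by (rule sum.cong) (auto simp: G_def intro!: arg_cong[where f="\<lambda>z. _ * z"] Lw_super)
  also have "\<dots> = (\<Sum>g\<in>G. (\<Sum>e\<in>sp X. cf X e * cf (br e y) g) * N M (u @ g # v))"
    by (simp add: sum_distrib_left sum_distrib_right sum.swap[of _ G] mult.assoc)
  also have "\<dots> = (\<Sum>g\<in>G. cf (br X y) g * N M (u @ g # v))"
    by (rule sum.cong[OF refl]) (metis cf_br_l)
  also have "\<dots> = Lw M u (br X y) v"
    by (rule Lw_super[symmetric]) (auto simp: G_def)
  finally show ?thesis .
qed

lemma swap2: "(\<Sum>e\<in>sp X. cf X e * Lw M (u @ e # m) Y v) = (\<Sum>f\<in>sp Y. cf Y f * Lw M u X (m @ f # v))"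
  by (simp add: Lw_def sum_distrib_left sum.swap[of _ "sp Y"] mult.left_commute)

lemma br_neg_r: "br x (- y) = - br x y"
proof -
  have "br x y + br x (- y) = 0" using br_add_r[of x y "- y"] by (simp add: br_zero_r)
  then show ?thesis by (simp add: eq_neg_iff_add_eq_0 add.commute)
qed

lemma jac': "br (br a b) c + br (br c a) b - br (br c b) a = 0"
proof -
  have "br (br a b) c = - br c (br a b)" by (rule br_anti)
  moreover have "br (br c a) b = - br b (br c a)" by (rule br_anti)
  moreover have "br (br c b) a = br a (br b c)"
    by (metis br_anti br_neg_r minus_minus)
  ultimately have "br (br a b) c + br (br c a) b - br (br c b) a = - (br a (br b c) + br b (br c a) + br c (br a b))"
    by (simp add: algebra_simps)
  then show ?thesis using jacobi[of a b c] by simp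
qed

lemma Lw_jac: "Lw M u (br (br a b) c) v + Lw M u (br (br c a) b) v - Lw M u (br (br c b) a) v = 0"
proof -
  have "Lw M u (br (br a b) c + br (br c a) b - br (br c b) a) v = 0" by (simp add: jac' Lw_zero)
  then show ?thesis by (simp add: Lw_add Lw_diff)
qed

lemma K_all: "Kn M n"
proof (induction n rule: less_induct)
  case (less n)
  have IHn: "\<And>n'. n' < n \<Longrightarrow> Kn M n'" using less.IH .
  have Q: "\<forall>u a b v. length u + length v + 2 = n \<longrightarrow> ninv lt (u @ a # b # v) = k \<longrightarrow> lt b a \<longrightarrow>
      N M (u @ a # b # v) - N M (u @ b # a # v) = Lw M u (br a b) v" for k
  proof (induction k rule: less_induct)
    case (less k)
    have IHk: "\<And>u' a' b' v'. length u' + length v' + 2 = n \<Longrightarrow> ninv lt (u' @ a' # b' # v') < k \<Longrightarrow> lt b' a' \<Longrightarrow>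
        N M (u' @ a' # b' # v') - N M (u' @ b' # a' # v') = Lw M u' (br a' b') v'"
      using less.IH by blast
    show ?case
    proof (intro allI impI)
      fix u v :: "'g list" and a b :: 'g
      assume len: "length u + length v + 2 = n" and nk: "ninv lt (u @ a # b # v) = k" and ba: "lt b a"
      show "N M (u @ a # b # v) - N M (u @ b # a # v) = Lw M u (br a b) v"
      proof (cases "noinv lt (u @ [a])")
        case True
        then show ?thesis using N_unfold[OF ba True, of M v] by simp
      next
        case False
        then obtain u1 c d r where ua: "u @ [a] = u1 @ c # d # r" and dc: "lt d c" and ni: "noinv lt (u1 @ [c])"
          by (rule first_inv)
        show ?thesis
        proof (cases r rule: rev_cases)
          case Nil
          then have u: "u = u1 @ [c]" and da: "d = a" using ua by auto
          have ac: "lt a c" using dc da by simp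
          have bc: "lt b c" using lt_trans[OF ba ac] .
          have len1: "length u1 + length v + 3 = n" using len u by simp
          have Kp: "Kn M (length u1 + length v + 2)" using IHn len1 by simp
          have e0: "N M (u1 @ c # a # b # v) = N M (u1 @ a # c # b # v) + Lw M u1 (br c a) (b # v)"
            using N_unfold[OF ac ni, of M "b # v"] by simp
          have n0: "ninv lt (u1 @ c # a # b # v) = Suc (ninv lt (u1 @ a # c # b # v))"
            using ninv_swap'[OF ac, of u1 "b # v"] by simp
          have n1: "ninv lt (u1 @ a # c # b # v) = Suc (ninv lt (u1 @ a # b # c # v))"
            using ninv_swap'[OF bc, of "u1 @ [a]" v] by simp
          have n3: "ninv lt (u1 @ c # a # b # v) = Suc (ninv lt (u1 @ c # b # a # v))"
            using ninv_swap'[OF ba, of "u1 @ [c]" v] by simp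
          have n4: "ninv lt (u1 @ c # b # a # v) = Suc (ninv lt (u1 @ b # c # a # v))"
            using ninv_swap'[OF bc, of u1 "a # v"] by simp
          have kk: "k = ninv lt (u1 @ c # a # b # v)" using nk u by simp
          have IH1: "N M (u1 @ a # c # b # v) - N M (u1 @ a # b # c # v) = Lw M (u1 @ [a]) (br c b) v"
            using IHk[of "u1 @ [a]" v c b] len1 n0 kk bc by simp
          have IH2: "N M (u1 @ a # b # c # v) - N M (u1 @ b # a # c # v) = Lw M u1 (br a b) (c # v)"
            using IHk[of u1 "c # v" a b] len1 n0 n1 kk ba by simp
          have IH3: "N M (u1 @ c # b # a # v) - N M (u1 @ b # c # a # v) = Lw M u1 (br c b) (a # v)"
            using IHk[of u1 "a # v" c b] len1 n3 kk bc by simp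
          have IH4: "N M (u1 @ b # c # a # v) - N M (u1 @ b # a # c # v) = Lw M (u1 @ [b]) (br c a) v"
            using IHk[of "u1 @ [b]" v c a] len1 n3 n4 kk ac by simp
          have X1: "Lw M u1 (br a b) (c # v) - Lw M (u1 @ [c]) (br a b) v = Lw M u1 (br (br a b) c) v"
            by (rule Xlem[OF Kp])
          have X2: "Lw M u1 (br c a) (b # v) - Lw M (u1 @ [b]) (br c a) v = Lw M u1 (br (br c a) b) v"
            by (rule Xlem[OF Kp])
          have X3: "Lw M u1 (br c b) (a # v) - Lw M (u1 @ [a]) (br c b) v = Lw M u1 (br (br c b) a) v"
            by (rule Xlem[OF Kp])
          have J: "Lw M u1 (br (br a b) c) v + Lw M u1 (br (br c a) b) v - Lw M u1 (br (br c b) a) v = 0"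
            by (rule Lw_jac)
          have "N M (u1 @ c # a # b # v) - N M (u1 @ c # b # a # v) = Lw M (u1 @ [c]) (br a b) v"
            using e0 IH1 IH2 IH3 IH4 X1 X2 X3 J by (simp add: algebra_simps)
          then show ?thesis using u da by simp
        next
          case (snoc m z)
          then have u: "u = u1 @ c # d # m" and za: "z = a" using ua by auto
          have len1: "length u1 + length m + length v + 4 = n" using len u by simp
          have Kp: "Kn M (n - 1)" using IHn len1 by simp
          have e0: "N M (u1 @ c # d # m @ a # b # v) = N M (u1 @ d # c # m @ a # b # v) + Lw M u1 (br c d) (m @ a # b # v)"
            using N_unfold[OF dc ni, of M "m @ a # b # v"] by simp
          have n1: "ninv lt (u1 @ c # d # m @ a # b # v) = Suc (ninv lt (u1 @ d # c # m @ a # b # v))"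
            using ninv_swap'[OF dc, of u1 "m @ a # b # v"] by simp
          have n2: "ninv lt (u1 @ c # d # m @ a # b # v) = Suc (ninv lt (u1 @ c # d # m @ b # a # v))"
            using ninv_swap'[OF ba, of "u1 @ c # d # m" v] by simp
          have kk: "k = ninv lt (u1 @ c # d # m @ a # b # v)" using nk u by simp
          have IH1: "N M (u1 @ d # c # m @ a # b # v) - N M (u1 @ d # c # m @ b # a # v) = Lw M (u1 @ d # c # m) (br a b) v"
            using IHk[of "u1 @ d # c # m" v a b] len1 n1 kk ba by simp
          have IH2: "N M (u1 @ c # d # m @ b # a # v) - N M (u1 @ d # c # m @ b # a # v) = Lw M u1 (br c d) (m @ b # a # v)"
            using IHk[of u1 "m @ b # a # v" c d] len1 n2 kk dc by simp
          have k1: "N M (u1 @ e # m @ a # b # v) - N M (u1 @ e # m @ b # a # v) = Lw M (u1 @ e # m) (br a b) v" for e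
            using KnD[OF Kp, of "u1 @ e # m" v a b] len1 by simp
          have S1: "Lw M u1 (br c d) (m @ a # b # v) - Lw M u1 (br c d) (m @ b # a # v)
              = (\<Sum>e\<in>sp (br c d). cf (br c d) e * Lw M (u1 @ e # m) (br a b) v)"
            unfolding Lw_minus
            by (rule sum.cong) (simp_all only: k1)
          have S2: "Lw M (u1 @ c # d # m) (br a b) v - Lw M (u1 @ d # c # m) (br a b) v
              = (\<Sum>f\<in>sp (br a b). cf (br a b) f * Lw M u1 (br c d) (m @ f # v))"
            unfolding Lw_minus
            by (rule sum.cong) (use KnD[OF Kp] len1 in simp_all)
          have S3: "(\<Sum>e\<in>sp (br c d). cf (br c d) e * Lw M (u1 @ e # m) (br a b) v)
              = (\<Sum>f\<in>sp (br a b). cf (br a b) f * Lw M u1 (br c d) (m @ f # v))"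
            by (rule swap2)
          have "N M (u1 @ c # d # m @ a # b # v) - N M (u1 @ c # d # m @ b # a # v) = Lw M (u1 @ c # d # m) (br a b) v"
            using e0 IH1 IH2 S1 S2 S3 by (simp add: algebra_simps)
          then show ?thesis using u by simp
        qed
      qed
    qed
  qed
  show "Kn M n" unfolding Kn_def
  proof (intro allI impI)
    fix u v :: "'g list" and a b :: 'g
    assume len: "length u + length v + 2 = n"
    consider "a = b" | "lt b a" | "lt a b" using lt_total by blast
    then show "N M (u @ a # b # v) - N M (u @ b # a # v) = Lw M u (br a b) v"
    proof cases
      case 1 then show ?thesis by (simp add: br_alt Lw_zero)
    next
      case 2 then show ?thesis using Q len by blast
    next
      case 3
      then have "N M (u @ b # a # v) - N M (u @ a # b # v) = Lw M u (br b a) v" using Q len by blast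
      then show ?thesis by (simp add: br_anti[of b a] Lw_neg algebra_simps)
    qed
  qed
qed

lemma K: "N M (u @ a # b # v) - N M (u @ b # a # v) = Lw M u (br a b) v"
  using KnD[OF K_all] by blast

end


context pbw
begin

fun Lx :: "('g list \<Rightarrow> 'k) \<Rightarrow> 'g list \<Rightarrow> 'k" where
  "Lx F [] = F []"
| "Lx F (x # xs) = (\<Sum>e\<in>sp x. cf x e * Lx (\<lambda>ys. F (e # ys)) xs)"

lemma Lx_add: "Lx (\<lambda>w. F w + G w) xs = Lx F xs + Lx G xs"
  by (induction xs arbitrary: F G) (simp_all add: distrib_left sum.distrib)

lemma Lx_scale: "Lx (\<lambda>w. c * F w) xs = c * Lx F xs"
  by (induction xs arbitrary: F) (simp_all add: sum_distrib_left mult.left_commute)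

lemma Lx_diff: "Lx (\<lambda>w. F w - G w) xs = Lx F xs - Lx G xs"
  by (induction xs arbitrary: F G) (simp_all add: right_diff_distrib sum_subtractf)

lemma Lx_zero: "Lx (\<lambda>w. 0) xs = 0"
  by (induction xs) simp_all

lemma Lx_sum: "Lx (\<lambda>w. \<Sum>i\<in>I. F i w) xs = (\<Sum>i\<in>I. Lx (F i) xs)"
  by (induction xs arbitrary: F) (simp_all add: sum_distrib_left sum.swap[of _ I])

lemma Lx_cong_len: "(\<And>w. length w = length xs \<Longrightarrow> F w = G w) \<Longrightarrow> Lx F xs = Lx G xs"
proof (induction xs arbitrary: F G)
  case Nil then show ?case by simp
next
  case (Cons x xs)
  have "Lx (\<lambda>ys. F (e # ys)) xs = Lx (\<lambda>ys. G (e # ys)) xs" for e by (rule Cons.IH) (simp add: Cons.prems)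
  then show ?case by simp
qed

lemma Lx_append: "Lx F (p @ s) = Lx (\<lambda>p'. Lx (\<lambda>s'. F (p' @ s')) s) p"
  by (induction p arbitrary: F) simp_all

lemma Lx_cons_super: assumes "finite A" "sp x \<subseteq> A" shows "Lx F (x # xs) = (\<Sum>e\<in>A. cf x e * Lx (\<lambda>ys. F (e # ys)) xs)"
  unfolding Lx.simps by (rule sum_sp[symmetric, OF assms])

lemma Lx_cons_add: "Lx G ((x + y) # q) = Lx G (x # q) + Lx G (y # q)"
proof -
  let ?A = "sp x \<union> sp y \<union> sp (x + y)"
  have "Lx G ((x + y) # q) = (\<Sum>e\<in>?A. cf (x + y) e * Lx (\<lambda>ys. G (e # ys)) q)" by (rule Lx_cons_super) auto
  also have "\<dots> = (\<Sum>e\<in>?A. cf x e * Lx (\<lambda>ys. G (e # ys)) q) + (\<Sum>e\<in>?A. cf y e * Lx (\<lambda>ys. G (e # ys)) q)"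
    by (simp add: cf_add distrib_right sum.distrib)
  also have "\<dots> = Lx G (x # q) + Lx G (y # q)"
  proof -
    have "Lx G (x # q) = (\<Sum>e\<in>?A. cf x e * Lx (\<lambda>ys. G (e # ys)) q)" by (rule Lx_cons_super) auto
    moreover have "Lx G (y # q) = (\<Sum>e\<in>?A. cf y e * Lx (\<lambda>ys. G (e # ys)) q)" by (rule Lx_cons_super) auto
    ultimately show ?thesis by simp
  qed
  finally show ?thesis .
qed

lemma Lx_cons_scale: "Lx G (sc c x # q) = c * Lx G (x # q)"
proof -
  let ?A = "sp x \<union> sp (sc c x)"
  have "Lx G (sc c x # q) = (\<Sum>e\<in>?A. cf (sc c x) e * Lx (\<lambda>ys. G (e # ys)) q)" by (rule Lx_cons_super) auto
  also have "\<dots> = c * (\<Sum>e\<in>?A. cf x e * Lx (\<lambda>ys. G (e # ys)) q)"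
    by (simp add: cf_scale sum_distrib_left mult.assoc)
  also have "\<dots> = c * Lx G (x # q)"
  proof -
    have "Lx G (x # q) = (\<Sum>e\<in>?A. cf x e * Lx (\<lambda>ys. G (e # ys)) q)" by (rule Lx_cons_super) auto
    then show ?thesis by simp
  qed
  finally show ?thesis .
qed

lemma Lx_letter_add: "Lx F (p @ (x + y) # q) = Lx F (p @ x # q) + Lx F (p @ y # q)"
  by (simp only: Lx_append Lx_cons_add Lx_add)

lemma Lx_letter_scale: "Lx F (p @ sc c x # q) = c * Lx F (p @ x # q)"
  by (simp only: Lx_append Lx_cons_scale Lx_scale)

lemma cf_br2: "cf (br x y) g = (\<Sum>e\<in>sp x. \<Sum>f\<in>sp y. cf x e * cf y f * cf (br e f) g)"
proof -
  have "cf (br x y) g = (\<Sum>e\<in>sp x. cf x e * cf (br e y) g)" by (rule cf_br_l)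
  also have "\<dots> = (\<Sum>e\<in>sp x. cf x e * (\<Sum>f\<in>sp y. cf y f * cf (br e f) g))"
    by (rule sum.cong[OF refl]) (metis cf_br_r)
  also have "\<dots> = (\<Sum>e\<in>sp x. \<Sum>f\<in>sp y. cf x e * cf y f * cf (br e f) g)"
    by (simp add: sum_distrib_left mult.assoc)
  finally show ?thesis .
qed

lemma Lx_K_inner:
  "Lx (\<lambda>s. N M (p' @ s)) (x # y # q) - Lx (\<lambda>s. N M (p' @ s)) (y # x # q) = Lx (\<lambda>s. N M (p' @ s)) (br x y # q)"
proof -
  define H where "H = sp (br x y) \<union> (\<Union>e\<in>sp x. \<Union>f\<in>sp y. sp (br e f))"
  have Hfin: "finite H" by (simp add: H_def)
  define Z where "Z g = Lx (\<lambda>s. N M (p' @ g # s)) q" for g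
  have 1: "Lx (\<lambda>s. N M (p' @ s)) (x # y # q) = (\<Sum>e\<in>sp x. \<Sum>f\<in>sp y. cf x e * cf y f * Lx (\<lambda>s. N M (p' @ e # f # s)) q)"
    by (simp add: sum_distrib_left mult.assoc)
  have 2: "Lx (\<lambda>s. N M (p' @ s)) (y # x # q) = (\<Sum>e\<in>sp x. \<Sum>f\<in>sp y. cf x e * cf y f * Lx (\<lambda>s. N M (p' @ f # e # s)) q)"
    by (simp add: sum_distrib_left mult.assoc sum.swap[of _ "sp x"] mult.left_commute)
  have 3: "Lx (\<lambda>s. N M (p' @ e # f # s)) q - Lx (\<lambda>s. N M (p' @ f # e # s)) q = (\<Sum>g\<in>H. cf (br e f) g * Z g)"
    if "e \<in> sp x" "f \<in> sp y" for e f
  proof -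
    have "Lx (\<lambda>s. N M (p' @ e # f # s)) q - Lx (\<lambda>s. N M (p' @ f # e # s)) q
        = Lx (\<lambda>s. N M (p' @ e # f # s) - N M (p' @ f # e # s)) q" by (simp add: Lx_diff)
    also have "\<dots> = Lx (\<lambda>s. \<Sum>g\<in>H. cf (br e f) g * N M (p' @ g # s)) q"
    proof (rule arg_cong[where f="\<lambda>F. Lx F q"], rule ext)
      fix s
      have "N M (p' @ e # f # s) - N M (p' @ f # e # s) = Lw M p' (br e f) s" by (rule K)
      also have "\<dots> = (\<Sum>g\<in>H. cf (br e f) g * N M (p' @ g # s))"
        by (rule Lw_super) (use that in \<open>auto simp: H_def\<close>)
      finally show "N M (p' @ e # f # s) - N M (p' @ f # e # s) = (\<Sum>g\<in>H. cf (br e f) g * N M (p' @ g # s))" .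
    qed
    also have "\<dots> = (\<Sum>g\<in>H. cf (br e f) g * Z g)" by (simp add: Lx_sum Lx_scale Z_def)
    finally show ?thesis .
  qed
  have "Lx (\<lambda>s. N M (p' @ s)) (x # y # q) - Lx (\<lambda>s. N M (p' @ s)) (y # x # q)
      = (\<Sum>e\<in>sp x. \<Sum>f\<in>sp y. cf x e * cf y f * (Lx (\<lambda>s. N M (p' @ e # f # s)) q - Lx (\<lambda>s. N M (p' @ f # e # s)) q))"
    unfolding 1 2 by (simp add: sum_subtractf right_diff_distrib)
  also have "\<dots> = (\<Sum>e\<in>sp x. \<Sum>f\<in>sp y. cf x e * cf y f * (\<Sum>g\<in>H. cf (br e f) g * Z g))"
    by (intro sum.cong refl) (simp add: 3)
  also have "\<dots> = (\<Sum>g\<in>H. (\<Sum>e\<in>sp x. \<Sum>f\<in>sp y. cf x e * cf y f * cf (br e f) g) * Z g)"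
    by (simp add: sum_distrib_left sum_distrib_right sum.swap[of _ H] mult.assoc)
  also have "\<dots> = (\<Sum>g\<in>H. cf (br x y) g * Z g)"
    by (rule sum.cong[OF refl]) (metis cf_br2)
  also have "\<dots> = Lx (\<lambda>s. N M (p' @ s)) (br x y # q)"
    by (subst Lx_cons_super[OF Hfin]) (auto simp: H_def Z_def)
  finally show ?thesis .
qed

lemma Lx_K: "Lx (N M) (p @ x # y # q) - Lx (N M) (p @ y # x # q) = Lx (N M) (p @ br x y # q)"
proof -
  have "Lx (N M) (p @ x # y # q) - Lx (N M) (p @ y # x # q)
      = Lx (\<lambda>p'. Lx (\<lambda>s. N M (p' @ s)) (x # y # q) - Lx (\<lambda>s. N M (p' @ s)) (y # x # q)) p"
    by (simp only: Lx_append Lx_diff)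
  also have "\<dots> = Lx (\<lambda>p'. Lx (\<lambda>s. N M (p' @ s)) (br x y # q)) p"
    by (simp only: Lx_K_inner)
  also have "\<dots> = Lx (N M) (p @ br x y # q)" by (simp only: Lx_append)
  finally show ?thesis .
qed

definition psi :: "'g multiset \<Rightarrow> 'g list \<Rightarrow> 'k" where "psi M = Lx (N M)"

lemma Phi_I: assumes "f \<in> ue_ideal sc br" shows "ev (psi M) f = 0"
proof -
  let ?V = "{f. f \<in> fin_supp \<and> ev (psi M) f = 0}"
  have V: "subsp ?V" unfolding subsp_def
    by (auto simp: ev_add ev_scale)
  have "Igen sc br \<subseteq> ?V"
  proof
    fix g assume "g \<in> Igen sc br"
    then obtain p q r where g: "g = sh p q r" and r: "r \<in> ue_rels sc br" unfolding Igen_def by blast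
    have rf: "r \<in> fin_supp" by (rule rels_fin[OF r])
    have "ev (\<lambda>s. psi M (p @ s @ q)) r = 0"
      using r unfolding ue_rels_def
    proof (elim UnE CollectE exE conjE)
      fix x y assume "r = fsub (fsub (wd [x + y]) (wd [x])) (wd [y])"
      then show ?thesis by (simp add: ev_sub psi_def Lx_letter_add)
    next
      fix c x assume "r = fsub (wd [sc c x]) (fscale c (wd [x]))"
      then show ?thesis by (simp add: ev_sub ev_scale psi_def Lx_letter_scale)
    next
      fix x y assume "r = fsub (fsub (wd [x, y]) (wd [y, x])) (wd [br x y])"
      then show ?thesis using Lx_K[of M p x y q] by (simp add: ev_sub psi_def)
    qed
    then show "g \<in> ?V" using rf by (simp add: g ev_sh)
  qed
  then have "fspan (Igen sc br) \<subseteq> ?V" by (rule fspan_min[OF V])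
  then show ?thesis using assms ideal_eq by blast
qed

end


definition Hom :: "nat \<Rightarrow> ('g list \<Rightarrow> 'k::field) set" where
  "Hom m = {f. f \<in> fin_supp \<and> (\<forall>w. f w \<noteq> 0 \<longrightarrow> length w = m)}"

lemma Hom_subsp: "subsp (Hom m)"
  unfolding subsp_def Hom_def
proof (intro conjI ballI allI)
  fix f g :: "'a list \<Rightarrow> 'b" assume f: "f \<in> {f \<in> fin_supp. \<forall>w. f w \<noteq> 0 \<longrightarrow> length w = m}"
    and g: "g \<in> {f \<in> fin_supp. \<forall>w. f w \<noteq> 0 \<longrightarrow> length w = m}"
  have "fadd f g w \<noteq> 0 \<longrightarrow> length w = m" for w
    using f g by (cases "f w = 0") (auto simp: fapps)
  then show "fadd f g \<in> {f \<in> fin_supp. \<forall>w. f w \<noteq> 0 \<longrightarrow> length w = m}" using f g by auto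
next
  fix c and f :: "'a list \<Rightarrow> 'b" assume f: "f \<in> {f \<in> fin_supp. \<forall>w. f w \<noteq> 0 \<longrightarrow> length w = m}"
  then show "fscale c f \<in> {f \<in> fin_supp. \<forall>w. f w \<noteq> 0 \<longrightarrow> length w = m}" by (auto simp: fapps)
qed (auto simp: fin_supp_def)

lemma symz_fin: "symz xs \<in> fin_supp"
  unfolding symz_def by (intro fin_supp_scale fin_supp_fsum fin_supp_wd)

lemma symz_Hom: "(symz xs :: 'g list \<Rightarrow> 'k::field_char_0) \<in> Hom (length xs)"
proof -
  have "(symz xs :: 'g list \<Rightarrow> 'k) w \<noteq> 0 \<Longrightarrow> length w = length xs" for w
  proof (rule ccontr)
    assume "(symz xs :: 'g list \<Rightarrow> 'k) w \<noteq> 0" "length w \<noteq> length xs"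
    then have z: "\<forall>\<sigma>. wd (map (\<lambda>i. xs ! \<sigma> i) [0..<length xs]) w = (0::'k)" by (auto simp: wd_def)
    have "(\<Sum>\<sigma>\<in>{\<sigma>. \<sigma> permutes {..<length xs}}. wd (map (\<lambda>i. xs ! \<sigma> i) [0..<length xs]) w) = (0::'k)"
      by (rule sum.neutral) (use z in blast)
    then have "(symz xs :: 'g list \<Rightarrow> 'k) w = 0" by (simp add: symz_def fapps)
    then show False using \<open>(symz xs :: 'g list \<Rightarrow> 'k) w \<noteq> 0\<close> by simp
  qed
  then show ?thesis using symz_fin by (simp add: Hom_def)
qed

lemma sym_sub_Hom: "sym_sub m \<subseteq> Hom m"
  unfolding sym_sub_def by (rule fspan_min[OF Hom_subsp]) (auto intro: symz_Hom)

lemma sym_sub_subsp: "subsp (sym_sub m)"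
  unfolding sym_sub_def by (rule fspan_subsp)

lemma finite_mset_lists: "finite {t. mset t = M}"
proof -
  have "{t. mset t = M} \<subseteq> {t. set t \<subseteq> set_mset M \<and> length t = size M}" by auto
  then show ?thesis by (rule finite_subset) (rule finite_lists_length_eq, simp)
qed

context pbw
begin

definition Exc :: "'g list \<Rightarrow> 'g list \<Rightarrow> 'k" where
  "Exc w t = Lx (\<lambda>w'. if w' = t then 1 else 0) w"

lemma Ex_formula: "Exc w t = (if length w = length t then (\<Prod>i<length w. cf (w ! i) (t ! i)) else 0)"
proof (induction w arbitrary: t)
  case Nil
  then show ?case by (cases t) (simp_all add: Exc_def)
next
  case (Cons x xs)
  show ?case
  proof (cases t)
    case Nil
    have "(\<lambda>ys. if x' # ys = t then 1 else (0::'k)) = (\<lambda>ys. 0)" for x' using Nil by auto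
    then show ?thesis using Nil by (simp add: Exc_def Lx_zero)
  next
    case (Cons t0 t')
    have fn: "(\<lambda>ys. if e # ys = t then 1 else (0::'k)) = (\<lambda>ys. (if e = t0 then 1 else 0) * (if ys = t' then 1 else 0))" for e
      using Cons by auto
    have "Exc (x # xs) t = (\<Sum>e\<in>sp x. cf x e * ((if e = t0 then 1 else 0) * Exc xs t'))"
      by (simp add: Exc_def fn Lx_scale)
    also have "\<dots> = (\<Sum>e\<in>sp x. if e = t0 then cf x e * Exc xs t' else 0)"
      by (rule sum.cong) auto
    also have "\<dots> = cf x t0 * Exc xs t'" by (simp add: sum.delta')
    also have "\<dots> = (if length (x # xs) = length t then (\<Prod>i<length (x # xs). cf ((x # xs) ! i) (t ! i)) else 0)"
      using Cons.IH[of t'] Cons by (simp del: prod.lessThan_Suc add: prod.lessThan_Suc_shift)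
    finally show ?thesis .
  qed
qed

lemma Ex_len: "length w \<noteq> length t \<Longrightarrow> Exc w t = 0"
  by (simp add: Ex_formula)

lemma psi_top: "length w = size M \<Longrightarrow> psi M w = (\<Sum>t\<in>{t. mset t = M}. Exc w t)"
proof -
  assume l: "length w = size M"
  have "psi M w = Lx (\<lambda>w'. if mset w' = M then 1 else 0) w"
    unfolding psi_def by (rule Lx_cong_len) (simp add: N_top l)
  also have "\<dots> = Lx (\<lambda>w'. \<Sum>t\<in>{t. mset t = M}. if w' = t then 1 else 0) w"
    by (rule arg_cong[where f="\<lambda>F. Lx F w"]) (auto simp: finite_mset_lists sum.delta')
  also have "\<dots> = (\<Sum>t\<in>{t. mset t = M}. Exc w t)" by (simp add: Lx_sum Exc_def)
  finally show ?thesis .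
qed

lemma psi_low: "length w < size M \<Longrightarrow> psi M w = 0"
proof -
  assume l: "length w < size M"
  have "psi M w = Lx (\<lambda>w'. 0) w"
    unfolding psi_def by (rule Lx_cong_len) (use l in \<open>auto simp: N_top\<close>)
  then show ?thesis by (simp add: Lx_zero)
qed

definition EE :: "('g list \<Rightarrow> 'k) \<Rightarrow> 'g list \<Rightarrow> 'k" where
  "EE f t = ev (\<lambda>w. Exc w t) f"

lemma Phi_Hom_top: "f \<in> Hom m \<Longrightarrow> size M = m \<Longrightarrow> ev (psi M) f = (\<Sum>t\<in>{t. mset t = M}. EE f t)"
proof -
  assume f: "f \<in> Hom m" and M: "size M = m"
  have "ev (psi M) f = ev (\<lambda>w. \<Sum>t\<in>{t. mset t = M}. Exc w t) f"
    by (rule ev_psi_cong) (use f M in \<open>auto simp: Hom_def psi_top\<close>)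
  then show ?thesis by (simp add: ev_lin_psi EE_def)
qed

lemma Phi_Hom_low: "f \<in> Hom m \<Longrightarrow> m < size M \<Longrightarrow> ev (psi M) f = 0"
proof -
  assume f: "f \<in> Hom m" and M: "m < size M"
  have "ev (psi M) f = ev (\<lambda>w. 0) f"
    by (rule ev_psi_cong) (use f M in \<open>auto simp: Hom_def psi_low\<close>)
  then show ?thesis by (simp add: ev_def)
qed

lemma EE_symz_perm:
  assumes \<tau>: "\<tau> permutes {..<length t}"
  shows "EE (symz xs) (permute_list \<tau> t) = EE (symz xs) t"
proof -
  let ?m = "length xs"
  let ?P = "{\<sigma>. \<sigma> permutes {..<?m}}"
  have finP: "finite ?P" by (rule finite_permutations) simp
  have E: "EE (symz xs) t' = 1 / fact ?m * (\<Sum>\<sigma>\<in>?P. Exc (map (\<lambda>i. xs ! \<sigma> i) [0..<?m]) t')" for t'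
    unfolding EE_def symz_def
    by (simp add: ev_scale ev_fsum[OF finP] fin_supp_fsum)
  show ?thesis
  proof (cases "?m = length t")
    case False
    then show ?thesis by (simp add: E Ex_len)
  next
    case True
    have "(\<Sum>\<sigma>\<in>?P. Exc (map (\<lambda>i. xs ! \<sigma> i) [0..<?m]) (permute_list \<tau> t))
        = (\<Sum>\<sigma>\<in>?P. \<Prod>i<?m. cf (xs ! \<sigma> i) (t ! \<tau> i))"
      by (rule sum.cong[OF refl]) (simp add: Ex_formula True permute_list_nth[OF \<tau>])
    also have "\<dots> = (\<Sum>\<sigma>\<in>?P. \<Prod>j<?m. cf (xs ! (\<sigma> \<circ> inv \<tau>) j) (t ! j))"
    proof (rule sum.cong[OF refl])
      fix \<sigma> assume "\<sigma> \<in> ?P"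
      have \<tau>': "\<tau> permutes {..<?m}" using \<tau> True by simp
      have "(\<Prod>j<?m. cf (xs ! (\<sigma> \<circ> inv \<tau>) j) (t ! j)) = (\<Prod>i<?m. cf (xs ! (\<sigma> \<circ> inv \<tau>) (\<tau> i)) (t ! \<tau> i))"
        using prod.permute[OF \<tau>', of "\<lambda>j. cf (xs ! (\<sigma> \<circ> inv \<tau>) j) (t ! j)"] by (simp add: comp_def)
      also have "\<dots> = (\<Prod>i<?m. cf (xs ! \<sigma> i) (t ! \<tau> i))"
        using permutes_inverses(2)[OF \<tau>'] by simp
      finally show "(\<Prod>i<?m. cf (xs ! \<sigma> i) (t ! \<tau> i)) = (\<Prod>j<?m. cf (xs ! (\<sigma> \<circ> inv \<tau>) j) (t ! j))" by simp
    qed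
    also have "\<dots> = (\<Sum>\<sigma>\<in>?P. \<Prod>j<?m. cf (xs ! \<sigma> j) (t ! j))"
    proof -
      have inv\<tau>: "inv \<tau> permutes {..<?m}" using permutes_inv[OF \<tau>] True by simp
      show ?thesis using sum_permutations_compose_right[OF inv\<tau>, of "\<lambda>\<sigma>. \<Prod>j<?m. cf (xs ! \<sigma> j) (t ! j)"] by simp
    qed
    also have "\<dots> = (\<Sum>\<sigma>\<in>?P. Exc (map (\<lambda>i. xs ! \<sigma> i) [0..<?m]) t)"
      by (rule sum.cong[OF refl]) (simp add: Ex_formula True)
    finally show ?thesis by (simp add: E)
  qed
qed

lemma EE_lin: "finite A \<Longrightarrow> (\<And>g. g \<in> A \<Longrightarrow> g \<in> fin_supp) \<Longrightarrow> EE (fsum (\<lambda>g. fscale (c g) g) A) t = (\<Sum>g\<in>A. c g * EE g t)"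
  unfolding EE_def by (simp add: ev_fsum ev_scale)

lemma EE_sym_perm:
  assumes s: "s \<in> sym_sub m" and \<tau>: "\<tau> permutes {..<length t}"
  shows "EE s (permute_list \<tau> t) = EE s t"
proof -
  obtain A c where A: "finite A" "A \<subseteq> {symz xs |xs. length xs = m}" "s = fsum (\<lambda>g. fscale (c g) g) A"
    using s unfolding sym_sub_def fspan_def by blast
  have fin: "g \<in> A \<Longrightarrow> g \<in> fin_supp" for g using A(2) symz_fin by blast
  have "EE g (permute_list \<tau> t) = EE g t" if "g \<in> A" for g
    using that A(2) EE_symz_perm[OF \<tau>] by blast
  then show ?thesis unfolding A(3) by (simp add: EE_lin[OF A(1) fin])
qed

lemma EE_zero_of_Phi:
  assumes s: "s \<in> sym_sub m" and Z: "\<And>M. size M = m \<Longrightarrow> ev (psi M) s = 0"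
  shows "EE s t = 0"
proof (cases "length t = m")
  case False
  have sH: "s \<in> Hom m" using s sym_sub_Hom by blast
  have "EE s t = ev (\<lambda>w. 0) s"
    unfolding EE_def by (rule ev_psi_cong) (use sH False in \<open>auto simp: Hom_def Ex_len\<close>)
  then show ?thesis by (simp add: ev_def)
next
  case True
  let ?M = "mset t"
  let ?P = "{t'. mset t' = ?M}"
  have sH: "s \<in> Hom m" using s sym_sub_Hom by blast
  have eq: "EE s t' = EE s t" if "t' \<in> ?P" for t'
  proof -
    from that have "mset t' = mset t" by simp
    then obtain \<tau> where "\<tau> permutes {..<length t}" "permute_list \<tau> t = t'" by (rule mset_eq_permutation)
    then show ?thesis using EE_sym_perm[OF s] by metis
  qed
  have "0 = ev (psi ?M) s" using Z True by simp
  also have "\<dots> = (\<Sum>t'\<in>?P. EE s t')" by (rule Phi_Hom_top[OF sH]) (simp add: True)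
  also have "\<dots> = (\<Sum>t'\<in>?P. EE s t)" by (rule sum.cong[OF refl]) (rule eq)
  also have "\<dots> = of_nat (card ?P) * EE s t" by simp
  finally have "of_nat (card ?P) * EE s t = 0" by simp
  moreover have "card ?P \<noteq> 0" using finite_mset_lists[of ?M] by (auto simp: card_eq_0_iff)
  ultimately show ?thesis by simp
qed

end


context pbw
begin

abbreviation "UI \<equiv> ue_ideal sc br"

lemma LinI_gen: "finite A \<Longrightarrow> fsub (wd (p @ (\<Sum>e\<in>A. sc (c e) e) # q)) (fsum (\<lambda>e. fscale (c e) (wd (p @ e # q))) A) \<in> UI"
proof (induction A rule: finite_induct)
  case empty
  have T: "fsub (fsub (wd (p @ [0 + 0] @ q)) (wd (p @ [0] @ q))) (wd (p @ [0] @ q)) \<in> UI" by (rule I_add)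
  have "fsub (wd (p @ (\<Sum>e\<in>{}. sc (c e) e) # q)) (fsum (\<lambda>e. fscale (c e) (wd (p @ e # q))) {})
      = fscale (-1) (fsub (fsub (wd (p @ [0 + 0] @ q)) (wd (p @ [0] @ q))) (wd (p @ [0] @ q)))"
    by (rule ext) (simp add: fapps)
  then show ?case using subsp_scale[OF ideal_subsp T] by simp
next
  case (insert a A)
  let ?S = "\<Sum>e\<in>A. sc (c e) e"
  have T1: "fsub (fsub (wd (p @ [sc (c a) a + ?S] @ q)) (wd (p @ [sc (c a) a] @ q))) (wd (p @ [?S] @ q)) \<in> UI"
    by (rule I_add)
  have T2: "fsub (wd (p @ [sc (c a) a] @ q)) (fscale (c a) (wd (p @ [a] @ q))) \<in> UI" by (rule I_scale)
  have T3: "fsub (wd (p @ ?S # q)) (fsum (\<lambda>e. fscale (c e) (wd (p @ e # q))) A) \<in> UI" by (rule insert.IH)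
  have "fsub (wd (p @ (\<Sum>e\<in>insert a A. sc (c e) e) # q)) (fsum (\<lambda>e. fscale (c e) (wd (p @ e # q))) (insert a A))
      = fadd (fadd (fsub (fsub (wd (p @ [sc (c a) a + ?S] @ q)) (wd (p @ [sc (c a) a] @ q))) (wd (p @ [?S] @ q)))
               (fsub (wd (p @ [sc (c a) a] @ q)) (fscale (c a) (wd (p @ [a] @ q)))))
             (fsub (wd (p @ ?S # q)) (fsum (\<lambda>e. fscale (c e) (wd (p @ e # q))) A))"
    by (rule ext) (simp add: fapps insert.hyps algebra_simps)
  then show ?case using subsp_add[OF ideal_subsp subsp_add[OF ideal_subsp T1 T2] T3] by simp
qed

lemma LinI: "fsub (wd (p @ x # q)) (fsum (\<lambda>e. fscale (cf x e) (wd (p @ e # q))) (sp x)) \<in> UI"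
  using LinI_gen[of "sp x" p "cf x" q] by (simp add: cf_expand)

lemma ExpI: "fsub (wd (p @ u)) (\<lambda>t. Lx (\<lambda>t'. if p @ t' = t then 1 else 0) u) \<in> UI"
proof (induction u arbitrary: p)
  case Nil
  have "fsub (wd (p @ [])) (\<lambda>t. Lx (\<lambda>t'. if p @ t' = t then 1 else 0) []) = (\<lambda>_. 0)"
    by (rule ext) (auto simp: fapps wd_def)
  then show ?case using subsp_zero[OF ideal_subsp] by simp
next
  case (Cons x u)
  define G where "G e = (\<lambda>t. Lx (\<lambda>t'. if (p @ [e]) @ t' = t then 1 else 0) u)" for e
  have IH: "fsub (wd (p @ e # u)) (G e) \<in> UI" for e using Cons.IH[of "p @ [e]"] unfolding G_def by simp
  have A: "fsum (\<lambda>e. fscale (cf x e) (fsub (wd (p @ e # u)) (G e))) (sp x) \<in> UI"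
    by (rule subsp_fsum[OF ideal_subsp]) (simp_all add: subsp_scale[OF ideal_subsp IH])
  have "fsub (wd (p @ x # u)) (\<lambda>t. Lx (\<lambda>t'. if p @ t' = t then 1 else 0) (x # u))
      = fadd (fsub (wd (p @ x # u)) (fsum (\<lambda>e. fscale (cf x e) (wd (p @ e # u))) (sp x)))
             (fsum (\<lambda>e. fscale (cf x e) (fsub (wd (p @ e # u)) (G e))) (sp x))"
    by (rule ext) (simp add: fapps G_def algebra_simps sum_subtractf sum.distrib)
  then show ?case using subsp_add[OF ideal_subsp LinI A] by simp
qed

lemma sym_in_I:
  assumes s: "s \<in> sym_sub m" and Z: "\<And>t. EE s t = 0"
  shows "s \<in> UI"
proof -
  have sf: "s \<in> fin_supp" using s sym_sub_Hom by (auto simp: Hom_def)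
  let ?S = "{w. s w \<noteq> 0}"
  have finS: "finite ?S" using sf by (simp add: fin_supp_def)
  define Exf where "Exf w = (\<lambda>t. Lx (\<lambda>t'. if t' = t then 1 else 0) w)" for w
  have E0: "fsub (wd w) (Exf w) \<in> UI" for w using ExpI[of "[]" w] by (simp add: Exf_def)
  have D: "fsum (\<lambda>w. fscale (s w) (fsub (wd w) (Exf w))) ?S \<in> UI"
    by (rule subsp_fsum[OF ideal_subsp finS]) (simp add: subsp_scale[OF ideal_subsp E0])
  have "s = fsum (\<lambda>w. fscale (s w) (fsub (wd w) (Exf w))) ?S"
  proof (rule ext)
    fix t
    have e1: "s t = (\<Sum>w\<in>?S. s w * wd w t)"
    proof -
      have "s t = fsum (\<lambda>v. fscale (s v) (wd v)) ?S t" by (rule fun_cong[OF fin_supp_expand[OF sf]])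
      then show ?thesis by (simp only: fapps)
    qed
    have e2: "(\<Sum>w\<in>?S. s w * Exf w t) = EE s t" by (simp add: EE_def ev_def Exc_def Exf_def)
    show "s t = fsum (\<lambda>w. fscale (s w) (fsub (wd w) (Exf w))) ?S t"
      using e1 e2 Z[of t] by (simp add: fapps right_diff_distrib sum_subtractf)
  qed
  then show ?thesis using D by simp
qed

lemma Dlem: "(\<forall>m\<le>n. f m \<in> sym_sub m) \<Longrightarrow> fsum f {..n} \<in> UI \<Longrightarrow> (\<forall>m\<le>n. f m \<in> UI)"
proof (induction n)
  case 0
  have "fsum f {..0} = f 0" by (rule ext) (simp add: fapps)
  then show ?case using 0 by simp
next
  case (Suc n)
  have fH: "f m \<in> Hom m" if "m \<le> Suc n" for m using Suc.prems(1) that sym_sub_Hom by blast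
  have ff: "f m \<in> fin_supp" if "m \<le> Suc n" for m using fH[OF that] by (simp add: Hom_def)
  have Z: "ev (psi M) (f (Suc n)) = 0" if M: "size M = Suc n" for M
  proof -
    have "0 = ev (psi M) (fsum f {..Suc n})" using Phi_I[OF Suc.prems(2)] by simp
    also have "\<dots> = (\<Sum>m\<le>Suc n. ev (psi M) (f m))" by (rule ev_fsum) (simp_all add: ff)
    also have "\<dots> = ev (psi M) (f (Suc n)) + (\<Sum>m\<le>n. ev (psi M) (f m))" by simp
    also have "(\<Sum>m\<le>n. ev (psi M) (f m)) = 0"
    proof (rule sum.neutral, rule ballI)
      fix m assume m: "m \<in> {..n}"
      show "ev (psi M) (f m) = 0" using Phi_Hom_low[OF fH[of m]] M m by simp
    qed
    finally show ?thesis by simp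
  qed
  have top: "f (Suc n) \<in> UI"
    by (rule sym_in_I[OF Suc.prems(1)[rule_format, OF order_refl]]) (rule EE_zero_of_Phi[OF Suc.prems(1)[rule_format, OF order_refl] Z])
  have "fsum f {..n} = fsub (fsum f {..Suc n}) (f (Suc n))" by (rule ext) (simp add: fapps)
  then have "fsum f {..n} \<in> UI" using subsp_sub[OF ideal_subsp Suc.prems(2) top] by simp
  then have "\<forall>m\<le>n. f m \<in> UI" using Suc.IH Suc.prems(1) by simp
  then show ?case using top le_Suc_eq by auto
qed

end


context
  fixes sc :: "'k::field_char_0 \<Rightarrow> 'g::ab_group_add \<Rightarrow> 'g" and br :: "'g \<Rightarrow> 'g \<Rightarrow> 'g"
begin

abbreviation (input) W :: "'g list \<Rightarrow> 'g list \<Rightarrow> 'k" where "W \<equiv> wd"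

definition Low :: "nat \<Rightarrow> ('g list \<Rightarrow> 'k) set" where
  "Low n = fspan {wd z | z. length z < n}"

definition Qs :: "nat \<Rightarrow> ('g list \<Rightarrow> 'k) set" where
  "Qs n = set_plus_f (ue_ideal sc br) (Low n)"

lemma Qs_subsp: "subsp (Qs n)"
  unfolding Qs_def Low_def by (rule set_plus_f_subsp[OF ideal_subsp fspan_subsp])

lemma swapQ: "length p + length q + 2 = n \<Longrightarrow> fsub (W (p @ a # b # q)) (W (p @ b # a # q)) \<in> Qs n"
proof -
  assume n: "length p + length q + 2 = n"
  have i: "fsub (fsub (W (p @ [a, b] @ q)) (W (p @ [b, a] @ q))) (W (p @ [br a b] @ q)) \<in> ue_ideal sc br"
    by (rule I_br)
  have l: "W (p @ [br a b] @ q) \<in> Low n" unfolding Low_def by (rule fspan_base) (use n in auto)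
  have "fsub (W (p @ a # b # q)) (W (p @ b # a # q)) = fadd (fsub (fsub (W (p @ [a, b] @ q)) (W (p @ [b, a] @ q))) (W (p @ [br a b] @ q))) (W (p @ [br a b] @ q))"
    by (rule ext) (simp add: fapps)
  then show ?thesis using i l unfolding Qs_def set_plus_f_def by blast
qed

lemma moveQ: "length p + length s + length t + 1 = n \<Longrightarrow> fsub (W (p @ s @ a # t)) (W (p @ a # s @ t)) \<in> Qs n"
proof (induction s arbitrary: p)
  case Nil
  have "fsub (W (p @ [] @ a # t)) (W (p @ a # [] @ t)) = (\<lambda>_. 0)" by (rule ext) (simp add: fapps)
  then show ?case using subsp_zero[OF Qs_subsp] by simp
next
  case (Cons b s)
  have 1: "fsub (W ((p @ [b]) @ s @ a # t)) (W ((p @ [b]) @ a # s @ t)) \<in> Qs n"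
    by (rule Cons.IH) (use Cons.prems in simp)
  have 2: "fsub (W (p @ b # a # (s @ t))) (W (p @ a # b # (s @ t))) \<in> Qs n"
    by (rule swapQ) (use Cons.prems in simp)
  have "fsub (W (p @ (b # s) @ a # t)) (W (p @ a # (b # s) @ t))
      = fadd (fsub (W ((p @ [b]) @ s @ a # t)) (W ((p @ [b]) @ a # s @ t))) (fsub (W (p @ b # a # (s @ t))) (W (p @ a # b # (s @ t))))"
    by (rule ext) (simp add: fapps)
  then show ?case using subsp_add[OF Qs_subsp 1 2] by simp
qed

lemma msetQ: "mset y = mset y' \<Longrightarrow> length p + length y = n \<Longrightarrow> fsub (W (p @ y)) (W (p @ y')) \<in> Qs n"
proof (induction y' arbitrary: p y)
  case Nil
  then have "y = []" by simp
  then have "fsub (W (p @ y)) (W (p @ [])) = (\<lambda>_. 0)" by (intro ext) (simp add: fapps)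
  then show ?case using subsp_zero[OF Qs_subsp] by simp
next
  case (Cons a y'')
  have "a \<in> set y" using Cons.prems(1) by (metis list.set_intros(1) set_mset_mset)
  then obtain s t where y: "y = s @ a # t" by (meson split_list)
  have 1: "fsub (W (p @ s @ a # t)) (W (p @ a # s @ t)) \<in> Qs n"
    by (rule moveQ) (use Cons.prems y in simp)
  have ms: "mset (s @ t) = mset y''" using Cons.prems(1) y by simp
  have 2: "fsub (W ((p @ [a]) @ s @ t)) (W ((p @ [a]) @ y'')) \<in> Qs n"
    by (rule Cons.IH[OF ms]) (use Cons.prems y in simp)
  have "fsub (W (p @ y)) (W (p @ a # y'')) = fadd (fsub (W (p @ s @ a # t)) (W (p @ a # s @ t))) (fsub (W ((p @ [a]) @ s @ t)) (W ((p @ [a]) @ y'')))"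
    by (rule ext) (simp add: fapps y)
  then show ?case using subsp_add[OF Qs_subsp 1 2] by simp
qed

lemma symQ: "length y = n \<Longrightarrow> fsub (wd y) (symz y) \<in> Qs n"
proof -
  assume n: "length y = n"
  let ?P = "{\<sigma>. \<sigma> permutes {..<length y}}"
  have finP: "finite ?P" by (rule finite_permutations) simp
  have cardP: "card ?P = fact (length y)" by (rule card_permutations) simp_all
  have each: "fsub (wd y) (W (map (\<lambda>i. y ! \<sigma> i) [0..<length y])) \<in> Qs n" if "\<sigma> \<in> ?P" for \<sigma>
  proof -
    have "mset (map (\<lambda>i. y ! \<sigma> i) [0..<length y]) = mset y"
      using mset_permute_list[of \<sigma> y] that by (simp add: permute_list_def)
    then show ?thesis using msetQ[of y "map (\<lambda>i. y ! \<sigma> i) [0..<length y]" "[]" n] n by simp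
  qed
  have "fsub (wd y) (symz y) = fscale (1 / fact (length y)) (fsum (\<lambda>\<sigma>. fsub (wd y) (W (map (\<lambda>i. y ! \<sigma> i) [0..<length y]))) ?P)"
  proof (rule ext)
    fix w
    have "(fact (length y) :: 'k) \<noteq> 0" by simp
    then show "fsub (wd y) (symz y) w = fscale (1 / fact (length y)) (fsum (\<lambda>\<sigma>. fsub (wd y) (W (map (\<lambda>i. y ! \<sigma> i) [0..<length y]))) ?P) w"
      by (simp add: fapps symz_def sum_subtractf cardP field_simps)
  qed
  moreover have "fsum (\<lambda>\<sigma>. fsub (W y) (W (map (\<lambda>i. y ! \<sigma> i) [0..<length y]))) ?P \<in> Qs n"
    by (rule subsp_fsum[OF Qs_subsp finP]) (rule each)
  ultimately show ?thesis using subsp_scale[OF Qs_subsp] by metis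
qed

definition Sp :: "nat \<Rightarrow> ('g list \<Rightarrow> 'k) set" where
  "Sp n = {f. \<exists>g. (\<forall>k\<le>n. g k \<in> sym_sub k) \<and> fsub f (fsum g {..n}) \<in> ue_ideal sc br}"

lemma Sp_subsp: "subsp (Sp n)"
  unfolding subsp_def
proof (intro conjI ballI allI)
  have z: "\<forall>k\<le>n. ((\<lambda>_. 0)::'g list \<Rightarrow> 'k) \<in> sym_sub k" using subsp_zero[OF sym_sub_subsp] by blast
  have "fsub ((\<lambda>_. 0)::'g list \<Rightarrow> 'k) (fsum (\<lambda>_ _. 0) {..n}) = (\<lambda>_. 0)" by (rule ext) (simp add: fapps)
  then have "fsub ((\<lambda>_. 0)::'g list \<Rightarrow> 'k) (fsum (\<lambda>_ _. 0) {..n}) \<in> ue_ideal sc br" using subsp_zero[OF ideal_subsp[of sc br]] by simp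
  then show "(\<lambda>_. 0) \<in> Sp n" unfolding Sp_def using z by (intro CollectI exI[of _ "\<lambda>_ _. 0"] conjI)
next
  fix f1 f2 assume "f1 \<in> Sp n" "f2 \<in> Sp n"
  then obtain g1 g2 where g1: "\<forall>k\<le>n. g1 k \<in> sym_sub k" "fsub f1 (fsum g1 {..n}) \<in> ue_ideal sc br"
    and g2: "\<forall>k\<le>n. g2 k \<in> sym_sub k" "fsub f2 (fsum g2 {..n}) \<in> ue_ideal sc br" unfolding Sp_def by blast
  have "fsub (fadd f1 f2) (fsum (\<lambda>k. fadd (g1 k) (g2 k)) {..n}) = fadd (fsub f1 (fsum g1 {..n})) (fsub f2 (fsum g2 {..n}))"
    by (rule ext) (simp add: fapps sum.distrib)
  then have "fsub (fadd f1 f2) (fsum (\<lambda>k. fadd (g1 k) (g2 k)) {..n}) \<in> ue_ideal sc br"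
    using subsp_add[OF ideal_subsp g1(2) g2(2)] by simp
  moreover have "\<forall>k\<le>n. fadd (g1 k) (g2 k) \<in> sym_sub k" using g1 g2 subsp_add[OF sym_sub_subsp] by blast
  ultimately show "fadd f1 f2 \<in> Sp n" unfolding Sp_def by (intro CollectI exI[of _ "\<lambda>k. fadd (g1 k) (g2 k)"] conjI) simp_all
next
  fix c f assume "f \<in> Sp n"
  then obtain g where g: "\<forall>k\<le>n. g k \<in> sym_sub k" "fsub f (fsum g {..n}) \<in> ue_ideal sc br" unfolding Sp_def by blast
  have "fsub (fscale c f) (fsum (\<lambda>k. fscale c (g k)) {..n}) = fscale c (fsub f (fsum g {..n}))"
    by (rule ext) (simp add: fapps sum_distrib_left right_diff_distrib)
  then have "fsub (fscale c f) (fsum (\<lambda>k. fscale c (g k)) {..n}) \<in> ue_ideal sc br"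
    using subsp_scale[OF ideal_subsp g(2)] by simp
  moreover have "\<forall>k\<le>n. fscale c (g k) \<in> sym_sub k" using g subsp_scale[OF sym_sub_subsp] by blast
  ultimately show "fscale c f \<in> Sp n" unfolding Sp_def by (intro CollectI exI[of _ "\<lambda>k. fscale c (g k)"] conjI) simp_all
qed

lemma Sp_mono: "m \<le> n \<Longrightarrow> Sp m \<subseteq> Sp n"
proof
  fix f assume mn: "m \<le> n" and "f \<in> Sp m"
  then obtain g where g: "\<forall>k\<le>m. g k \<in> sym_sub k" "fsub f (fsum g {..m}) \<in> ue_ideal sc br" unfolding Sp_def by blast
  define g' where "g' k = (if k \<le> m then g k else (\<lambda>_. 0))" for k
  have "fsum g' {..n} = fsum g {..m}"
  proof (rule ext)
    fix w
    have "(\<Sum>k\<le>n. g' k w) = (\<Sum>k\<le>m. g' k w)"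
      by (rule sum.mono_neutral_right) (use mn in \<open>auto simp: g'_def\<close>)
    then show "fsum g' {..n} w = fsum g {..m} w" by (simp add: fapps g'_def)
  qed
  moreover have "\<forall>k\<le>n. g' k \<in> sym_sub k" using g(1) subsp_zero[OF sym_sub_subsp] by (auto simp: g'_def)
  ultimately show "f \<in> Sp n" using g(2) unfolding Sp_def by auto
qed

lemma I_Sp: "f \<in> ue_ideal sc br \<Longrightarrow> f \<in> Sp n"
proof -
  assume f: "f \<in> ue_ideal sc br"
  have "fsub f (fsum (\<lambda>_ _. 0) {..n}) = f" by (rule ext) (simp add: fapps)
  moreover have "\<forall>k\<le>n. (\<lambda>_. 0) \<in> sym_sub k" using subsp_zero[OF sym_sub_subsp] by blast
  ultimately show ?thesis using f unfolding Sp_def by (intro CollectI exI[of _ "\<lambda>_ _. 0"]) auto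
qed

lemma symz_Sp: "length y = n \<Longrightarrow> (symz y :: 'g list \<Rightarrow> 'k) \<in> Sp n"
proof -
  assume n: "length y = n"
  define g :: "nat \<Rightarrow> 'g list \<Rightarrow> 'k" where "g k = (if k = n then symz y else (\<lambda>_. 0))" for k
  have "fsub (symz y) (fsum g {..n}) = (\<lambda>_. 0)"
  proof (rule ext)
    fix w
    have "(\<Sum>k\<le>n. g k w) = (\<Sum>k\<in>{n}. g k w)" by (rule sum.mono_neutral_right) (auto simp: g_def)
    then show "fsub (symz y) (fsum g {..n}) w = 0" by (simp add: fapps g_def)
  qed
  moreover have "\<forall>k\<le>n. g k \<in> sym_sub k"
  proof (intro allI impI)
    fix k assume "k \<le> n"
    show "g k \<in> sym_sub k"
    proof (cases "k = n")
      case True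
      have "symz y \<in> sym_sub n" unfolding sym_sub_def by (rule fspan_base) (use n in blast)
      then show ?thesis using True by (simp add: g_def)
    next
      case False
      then show ?thesis using subsp_zero[OF sym_sub_subsp] by (simp add: g_def)
    qed
  qed
  ultimately show ?thesis using subsp_zero[OF ideal_subsp[of sc br]] unfolding Sp_def by (intro CollectI exI[of _ g]) auto
qed

lemma wd_Sp: "length y \<le> n \<Longrightarrow> wd y \<in> Sp n"
proof (induction n arbitrary: y)
  case 0
  then have y: "y = []" by simp
  have "symz [] = (W [])"
  proof -
    have "{\<sigma>. \<sigma> permutes {..<0::nat}} = {id}" by (auto simp: permutes_empty)
    then show ?thesis by (rule_tac ext) (simp add: symz_def fapps)
  qed
  then show ?case using symz_Sp[of "[]" 0] y by simp
next
  case (Suc n)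
  show ?case
  proof (cases "length y \<le> n")
    case True
    then show ?thesis using Suc.IH Sp_mono[of n "Suc n"] by auto
  next
    case False
    then have ly: "length y = Suc n" using Suc.prems by simp
    have "fsub (wd y) (symz y) \<in> Qs (Suc n)" by (rule symQ[OF ly])
    then obtain i l where il: "fsub (wd y) (symz y) = fadd i l" "i \<in> ue_ideal sc br" "l \<in> Low (Suc n)"
      unfolding Qs_def set_plus_f_def by blast
    have "Low (Suc n) \<subseteq> Sp (Suc n)"
      unfolding Low_def
    proof (rule fspan_min[OF Sp_subsp], rule subsetI)
      fix h :: "'g list \<Rightarrow> 'k" assume "h \<in> {wd z |z. length z < Suc n}"
      then obtain z where "h = wd z" "length z \<le> n" by auto
      then show "h \<in> Sp (Suc n)" using Suc.IH Sp_mono[of n "Suc n"] by auto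
    qed
    then have l: "l \<in> Sp (Suc n)" using il by blast
    have "wd y = fadd (symz y) (fadd i l)"
    proof (rule ext)
      fix w show "wd y w = fadd (symz y) (fadd i l) w"
        using fun_cong[OF il(1), of w] by (simp add: fapps) (metis add.commute diff_eq_eq)
    qed
    then show ?thesis
      using subsp_add[OF Sp_subsp symz_Sp[OF ly] subsp_add[OF Sp_subsp I_Sp[OF il(2)] l]] by simp
  qed
qed

lemma part1: assumes v: "v \<in> fin_supp"
  shows "\<exists>N f. (\<forall>m\<le>N. f m \<in> sym_sub m) \<and> fsub v (fsum f {..N}) \<in> trace_kernel sc br"
proof -
  let ?S = "{w. v w \<noteq> 0}"
  have finS: "finite ?S" using v by (simp add: fin_supp_def)
  define N where "N = Max (length ` ?S \<union> {0})"
  have le: "w \<in> ?S \<Longrightarrow> length w \<le> N" for w unfolding N_def using finS by (intro Max_ge) auto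
  have "v = fsum (\<lambda>w. fscale (v w) (wd w)) ?S" by (rule fin_supp_expand[OF v])
  also have "\<dots> \<in> Sp N"
    by (rule subsp_fsum[OF Sp_subsp finS]) (use le in \<open>auto intro: subsp_scale[OF Sp_subsp] wd_Sp\<close>)
  finally obtain g where g: "\<forall>k\<le>N. g k \<in> sym_sub k" "fsub v (fsum g {..N}) \<in> ue_ideal sc br"
    unfolding Sp_def by blast
  then show ?thesis using I_TK by blast
qed

end


lemma perm_update_list:
  assumes \<sigma>: "\<sigma> permutes {..<length zs}" and j: "j < length zs"
  shows "(map (\<lambda>i. zs ! \<sigma> i) [0..<length zs])[j := v] = map (\<lambda>i. (zs[\<sigma> j := v]) ! \<sigma> i) [0..<length zs]"
proof (rule nth_equalityI)
  show "length ((map (\<lambda>i. zs ! \<sigma> i) [0..<length zs])[j := v]) = length (map (\<lambda>i. (zs[\<sigma> j := v]) ! \<sigma> i) [0..<length zs])"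
    by simp
  fix i assume i: "i < length ((map (\<lambda>i. zs ! \<sigma> i) [0..<length zs])[j := v])"
  then have i': "i < length zs" by simp
  have si: "\<sigma> i < length zs" using permutes_in_image[OF \<sigma>] i' by simp
  have inj: "\<sigma> i = \<sigma> j \<longleftrightarrow> i = j" using permutes_inj[OF \<sigma>] by (auto dest: injD)
  show "(map (\<lambda>i. zs ! \<sigma> i) [0..<length zs])[j := v] ! i = map (\<lambda>i. (zs[\<sigma> j := v]) ! \<sigma> i) [0..<length zs] ! i"
    using i' j si inj by (auto simp: nth_list_update)
qed

context
  fixes sc :: "'k::field_char_0 \<Rightarrow> 'g::ab_group_add \<Rightarrow> 'g" and br :: "'g \<Rightarrow> 'g \<Rightarrow> 'g"
begin

abbreviation (input) WK :: "'g list \<Rightarrow> 'g list \<Rightarrow> 'k" where "WK \<equiv> wd"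

definition ad :: "'g \<Rightarrow> ('g list \<Rightarrow> 'k) \<Rightarrow> 'g list \<Rightarrow> 'k" where
  "ad x f = fsub (sh [x] [] f) (sh [] [x] f)"

lemma ad_wd: "ad x (WK w) = fsub (WK (x # w)) (WK (w @ [x]))"
  by (simp add: ad_def sh_wd)

lemma ad_I: "f \<in> ue_ideal sc br \<Longrightarrow> ad x f \<in> ue_ideal sc br"
  unfolding ad_def by (intro subsp_sub[OF ideal_subsp] ideal_sh)

lemma ad_word: "fsub (fsub (WK (p @ x # w)) (WK (p @ w @ [x]))) (fsum (\<lambda>j. WK (p @ w[j := br x (w ! j)])) {..<length w}) \<in> ue_ideal sc br"
proof (induction w arbitrary: p)
  case Nil
  have "fsub (fsub (WK (p @ [x])) (WK (p @ [] @ [x]))) (fsum (\<lambda>j. WK (p @ [][j := br x ([] ! j)])) {..<length []}) = (\<lambda>_. 0)"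
    by (rule ext) (simp add: fapps)
  then show ?case using subsp_zero[OF ideal_subsp] by simp
next
  case (Cons a w)
  have T1: "fsub (fsub (WK (p @ [x, a] @ w)) (WK (p @ [a, x] @ w))) (WK (p @ [br x a] @ w)) \<in> ue_ideal sc br"
    by (rule I_br)
  have T2: "fsub (fsub (WK ((p @ [a]) @ x # w)) (WK ((p @ [a]) @ w @ [x]))) (fsum (\<lambda>j. WK ((p @ [a]) @ w[j := br x (w ! j)])) {..<length w}) \<in> ue_ideal sc br"
    by (rule Cons.IH)
  have "fsub (fsub (WK (p @ x # a # w)) (WK (p @ (a # w) @ [x]))) (fsum (\<lambda>j. WK (p @ (a # w)[j := br x ((a # w) ! j)])) {..<length (a # w)})
      = fadd (fsub (fsub (WK (p @ [x, a] @ w)) (WK (p @ [a, x] @ w))) (WK (p @ [br x a] @ w)))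
             (fsub (fsub (WK ((p @ [a]) @ x # w)) (WK ((p @ [a]) @ w @ [x]))) (fsum (\<lambda>j. WK ((p @ [a]) @ w[j := br x (w ! j)])) {..<length w}))"
    by (rule ext) (simp add: fapps sum.lessThan_Suc_shift del: sum.lessThan_Suc)
  then show ?case using subsp_add[OF ideal_subsp T1 T2] by simp
qed

lemma ad_symz:
  assumes k: "length zs = k"
  shows "fsub (ad x (symz zs)) (fsum (\<lambda>l. symz (zs[l := br x (zs ! l)])) {..<k}) \<in> ue_ideal sc br"
proof -
  let ?P = "{\<sigma>. \<sigma> permutes {..<k}}"
  have finP: "finite ?P" by (rule finite_permutations) simp
  define \<pi> where "\<pi> \<sigma> ys = map (\<lambda>i. ys ! \<sigma> i) [0..<k]" for \<sigma> and ys :: "'g list"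
  define T where "T \<sigma> = fsub (fsub (WK ([] @ x # \<pi> \<sigma> zs)) (WK ([] @ \<pi> \<sigma> zs @ [x])))
      (fsum (\<lambda>j. WK ([] @ (\<pi> \<sigma> zs)[j := br x (\<pi> \<sigma> zs ! j)])) {..<length (\<pi> \<sigma> zs)})" for \<sigma>
  have T: "T \<sigma> \<in> ue_ideal sc br" for \<sigma> unfolding T_def by (rule ad_word)
  have symz_eq: "symz ys = fscale (1 / fact k) (fsum (\<lambda>\<sigma>. WK (\<pi> \<sigma> ys)) ?P)" if "length ys = k" for ys
    using that by (simp add: symz_def \<pi>_def)
  have reidx: "(\<Sum>j<k. WK ((\<pi> \<sigma> zs)[j := br x (\<pi> \<sigma> zs ! j)]) w) = (\<Sum>l<k. WK (\<pi> \<sigma> (zs[l := br x (zs ! l)])) w)"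
    if \<sigma>: "\<sigma> \<in> ?P" for \<sigma> w
  proof -
    have \<sigma>': "\<sigma> permutes {..<length zs}" using \<sigma> k by simp
    have "(\<Sum>j<k. WK ((\<pi> \<sigma> zs)[j := br x (\<pi> \<sigma> zs ! j)]) w) = (\<Sum>j<k. WK (\<pi> \<sigma> (zs[\<sigma> j := br x (zs ! \<sigma> j)])) w)"
    proof (rule sum.cong[OF refl])
      fix j assume "j \<in> {..<k}"
      then have j: "j < length zs" using k by simp
      have "\<pi> \<sigma> zs ! j = zs ! \<sigma> j" using j k by (simp add: \<pi>_def)
      moreover have "(\<pi> \<sigma> zs)[j := br x (zs ! \<sigma> j)] = \<pi> \<sigma> (zs[\<sigma> j := br x (zs ! \<sigma> j)])"
        using perm_update_list[OF \<sigma>' j, of "br x (zs ! \<sigma> j)"] k by (simp add: \<pi>_def)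
      ultimately show "WK ((\<pi> \<sigma> zs)[j := br x (\<pi> \<sigma> zs ! j)]) w = WK (\<pi> \<sigma> (zs[\<sigma> j := br x (zs ! \<sigma> j)])) w" by simp
    qed
    also have "\<dots> = (\<Sum>l<k. WK (\<pi> \<sigma> (zs[l := br x (zs ! l)])) w)"
      using sum.permute[OF \<sigma>[simplified], of "\<lambda>l. WK (\<pi> \<sigma> (zs[l := br x (zs ! l)])) w"] by (simp add: comp_def)
    finally show ?thesis .
  qed
  have "fsub (ad x (symz zs)) (fsum (\<lambda>l. symz (zs[l := br x (zs ! l)])) {..<k}) = fscale (1 / fact k) (fsum T ?P)"
  proof (rule ext)
    fix w
    have lenp: "length (\<pi> \<sigma> zs) = k" for \<sigma> by (simp add: \<pi>_def)
    have A: "ad x (symz zs) w = 1 / fact k * (\<Sum>\<sigma>\<in>?P. WK (x # \<pi> \<sigma> zs) w - WK (\<pi> \<sigma> zs @ [x]) w)"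
      unfolding symz_eq[OF k] ad_def by (simp add: sh_scale sh_fsum sh_wd fapps sum_subtractf right_diff_distrib)
    have B: "fsum (\<lambda>l. symz (zs[l := br x (zs ! l)])) {..<k} w
        = 1 / fact k * (\<Sum>\<sigma>\<in>?P. \<Sum>l<k. WK (\<pi> \<sigma> (zs[l := br x (zs ! l)])) w)"
      using k by (simp add: symz_eq fapps sum_distrib_left sum.swap[of _ ?P])
    have C: "fscale (1 / fact k) (fsum T ?P) w = 1 / fact k * (\<Sum>\<sigma>\<in>?P. (WK (x # \<pi> \<sigma> zs) w - WK (\<pi> \<sigma> zs @ [x]) w)
        - (\<Sum>j<k. WK ((\<pi> \<sigma> zs)[j := br x (\<pi> \<sigma> zs ! j)]) w))"
      by (simp add: T_def fapps lenp)
    have D: "(\<Sum>\<sigma>\<in>?P. (WK (x # \<pi> \<sigma> zs) w - WK (\<pi> \<sigma> zs @ [x]) w) - (\<Sum>j<k. WK ((\<pi> \<sigma> zs)[j := br x (\<pi> \<sigma> zs ! j)]) w))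
        = (\<Sum>\<sigma>\<in>?P. WK (x # \<pi> \<sigma> zs) w - WK (\<pi> \<sigma> zs @ [x]) w) - (\<Sum>\<sigma>\<in>?P. \<Sum>l<k. WK (\<pi> \<sigma> (zs[l := br x (zs ! l)])) w)"
      by (simp add: sum_subtractf reidx)
    show "fsub (ad x (symz zs)) (fsum (\<lambda>l. symz (zs[l := br x (zs ! l)])) {..<k}) w = fscale (1 / fact k) (fsum T ?P) w"
      by (simp only: fsub_apply A B C D right_diff_distrib)
  qed
  moreover have "fscale (1 / fact k) (fsum T ?P) \<in> ue_ideal sc br"
    by (intro subsp_scale[OF ideal_subsp] subsp_fsum[OF ideal_subsp finP] T)
  ultimately show ?thesis by simp
qed

end


context
  fixes sc :: "'k::field_char_0 \<Rightarrow> 'g::ab_group_add \<Rightarrow> 'g" and br :: "'g \<Rightarrow> 'g \<Rightarrow> 'g"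
begin

abbreviation (input) WL :: "'g list \<Rightarrow> 'g list \<Rightarrow> 'k" where "WL \<equiv> wd"

lemma ad_lin:
  "ad x (fadd f g) = fadd (ad x f) (ad x g)"
  "ad x (fscale c f) = fscale c (ad x f)"
  "ad x (\<lambda>_. 0::'k) = (\<lambda>_. 0)"
  "ad x (fsub f g) = fsub (ad x f) (ad x g)"
  "ad x (fsum F A) = fsum (\<lambda>i. ad x (F i)) A"
  by (rule ext, simp add: ad_def sh_add sh_scale sh_zero sh_sub sh_fsum fapps sum_subtractf algebra_simps)+

lemma ad_sym: assumes g: "(g :: 'g list \<Rightarrow> 'k) \<in> sym_sub k"
  shows "\<exists>h. h \<in> sym_sub k \<and> fsub (ad x g) h \<in> ue_ideal sc br"
proof -
  let ?V = "{g :: 'g list \<Rightarrow> 'k. \<exists>h. h \<in> sym_sub k \<and> fsub (ad x g) h \<in> ue_ideal sc br}"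
  have V: "subsp ?V" unfolding subsp_def
  proof (intro conjI ballI allI)
    have "fsub (ad x (\<lambda>_. 0::'k)) (\<lambda>_. 0) = (\<lambda>_. 0)" by (rule ext) (simp add: ad_lin fapps)
    then show "(\<lambda>_. 0) \<in> ?V" using subsp_zero[OF sym_sub_subsp] subsp_zero[OF ideal_subsp[of sc br]]
      by (intro CollectI exI[of _ "\<lambda>_. 0"]) simp
  next
    fix f1 f2 assume "f1 \<in> ?V" "f2 \<in> ?V"
    then obtain h1 h2 where h: "h1 \<in> sym_sub k" "fsub (ad x f1) h1 \<in> ue_ideal sc br" "h2 \<in> sym_sub k" "fsub (ad x f2) h2 \<in> ue_ideal sc br"
      by blast
    have "fsub (ad x (fadd f1 f2)) (fadd h1 h2) = fadd (fsub (ad x f1) h1) (fsub (ad x f2) h2)"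
      by (rule ext) (simp add: ad_lin fapps)
    then show "fadd f1 f2 \<in> ?V" using subsp_add[OF sym_sub_subsp h(1,3)] subsp_add[OF ideal_subsp h(2,4)]
      by (intro CollectI exI[of _ "fadd h1 h2"]) simp
  next
    fix c f assume "f \<in> ?V"
    then obtain h where h: "h \<in> sym_sub k" "fsub (ad x f) h \<in> ue_ideal sc br" by blast
    have "fsub (ad x (fscale c f)) (fscale c h) = fscale c (fsub (ad x f) h)"
      by (rule ext) (simp add: ad_lin fapps algebra_simps)
    then show "fscale c f \<in> ?V" using subsp_scale[OF sym_sub_subsp h(1)] subsp_scale[OF ideal_subsp h(2)]
      by (intro CollectI exI[of _ "fscale c h"]) simp
  qed
  have "{symz xs |xs. length xs = k} \<subseteq> ?V"
  proof
    fix f :: "'g list \<Rightarrow> 'k" assume "f \<in> {symz xs |xs. length xs = k}"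
    then obtain zs where f: "f = symz zs" and k: "length zs = k" by blast
    have "fsum (\<lambda>l. symz (zs[l := br x (zs ! l)])) {..<k} \<in> sym_sub k"
      by (rule subsp_fsum[OF sym_sub_subsp]) (auto simp: sym_sub_def k intro!: fspan_base)
    then show "f \<in> ?V" using ad_symz[OF k, of x] f by blast
  qed
  from fspan_min[OF V this] have "sym_sub k \<subseteq> ?V" by (simp only: sym_sub_def)
  then show ?thesis using g by blast
qed

definition Gd :: "nat \<Rightarrow> ('g list \<Rightarrow> 'k) set" where
  "Gd K = {c. \<exists>h. (\<forall>k\<le>K. h k \<in> sym_sub k \<and> h k \<in> trace_kernel sc br) \<and> fsub c (fsum h {..K}) \<in> ue_ideal sc br}"

lemma Gd_subsp: "subsp (Gd K)"
  unfolding subsp_def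
proof (intro conjI ballI allI)
  have z: "\<forall>k\<le>K. ((\<lambda>_. 0)::'g list \<Rightarrow> 'k) \<in> sym_sub k \<and> ((\<lambda>_. 0)::'g list \<Rightarrow> 'k) \<in> trace_kernel sc br"
    using subsp_zero[OF sym_sub_subsp] subsp_zero[OF TK_subsp] by blast
  have "fsub ((\<lambda>_. 0)::'g list \<Rightarrow> 'k) (fsum (\<lambda>_ _. 0) {..K}) = (\<lambda>_. 0)" by (rule ext) (simp add: fapps)
  then have "fsub ((\<lambda>_. 0)::'g list \<Rightarrow> 'k) (fsum (\<lambda>_ _. 0) {..K}) \<in> ue_ideal sc br" using subsp_zero[OF ideal_subsp[of sc br]] by simp
  then show "(\<lambda>_. 0) \<in> Gd K" unfolding Gd_def using z by (intro CollectI exI[of _ "\<lambda>_ _. 0"] conjI)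
next
  fix f1 f2 assume "f1 \<in> Gd K" "f2 \<in> Gd K"
  then obtain g1 g2 where g1: "\<forall>k\<le>K. g1 k \<in> sym_sub k \<and> g1 k \<in> trace_kernel sc br" "fsub f1 (fsum g1 {..K}) \<in> ue_ideal sc br"
    and g2: "\<forall>k\<le>K. g2 k \<in> sym_sub k \<and> g2 k \<in> trace_kernel sc br" "fsub f2 (fsum g2 {..K}) \<in> ue_ideal sc br" unfolding Gd_def by blast
  have "fsub (fadd f1 f2) (fsum (\<lambda>k. fadd (g1 k) (g2 k)) {..K}) = fadd (fsub f1 (fsum g1 {..K})) (fsub f2 (fsum g2 {..K}))"
    by (rule ext) (simp add: fapps sum.distrib)
  then have "fsub (fadd f1 f2) (fsum (\<lambda>k. fadd (g1 k) (g2 k)) {..K}) \<in> ue_ideal sc br"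
    using subsp_add[OF ideal_subsp g1(2) g2(2)] by simp
  moreover have "\<forall>k\<le>K. fadd (g1 k) (g2 k) \<in> sym_sub k \<and> fadd (g1 k) (g2 k) \<in> trace_kernel sc br"
    using g1 g2 subsp_add[OF sym_sub_subsp] subsp_add[OF TK_subsp] by blast
  ultimately show "fadd f1 f2 \<in> Gd K" unfolding Gd_def by (intro CollectI exI[of _ "\<lambda>k. fadd (g1 k) (g2 k)"] conjI) simp_all
next
  fix c f assume "f \<in> Gd K"
  then obtain g where g: "\<forall>k\<le>K. g k \<in> sym_sub k \<and> g k \<in> trace_kernel sc br" "fsub f (fsum g {..K}) \<in> ue_ideal sc br" unfolding Gd_def by blast
  have "fsub (fscale c f) (fsum (\<lambda>k. fscale c (g k)) {..K}) = fscale c (fsub f (fsum g {..K}))"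
    by (rule ext) (simp add: fapps sum_distrib_left right_diff_distrib)
  then have "fsub (fscale c f) (fsum (\<lambda>k. fscale c (g k)) {..K}) \<in> ue_ideal sc br"
    using subsp_scale[OF ideal_subsp g(2)] by simp
  moreover have "\<forall>k\<le>K. fscale c (g k) \<in> sym_sub k \<and> fscale c (g k) \<in> trace_kernel sc br"
    using g subsp_scale[OF sym_sub_subsp] subsp_scale[OF TK_subsp] by blast
  ultimately show "fscale c f \<in> Gd K" unfolding Gd_def by (intro CollectI exI[of _ "\<lambda>k. fscale c (g k)"] conjI) simp_all
qed

lemma Gd_mono: "m \<le> n \<Longrightarrow> Gd m \<subseteq> Gd n"
proof
  fix f assume mn: "m \<le> n" and "f \<in> Gd m"
  then obtain g where g: "\<forall>k\<le>m. g k \<in> sym_sub k \<and> g k \<in> trace_kernel sc br" "fsub f (fsum g {..m}) \<in> ue_ideal sc br" unfolding Gd_def by blast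
  define g' where "g' k = (if k \<le> m then g k else (\<lambda>_. 0))" for k
  have "fsum g' {..n} = fsum g {..m}"
  proof (rule ext)
    fix w
    have "(\<Sum>k\<le>n. g' k w) = (\<Sum>k\<le>m. g' k w)"
      by (rule sum.mono_neutral_right) (use mn in \<open>auto simp: g'_def\<close>)
    then show "fsum g' {..n} w = fsum g {..m} w" by (simp add: fapps g'_def)
  qed
  moreover have "\<forall>k\<le>n. g' k \<in> sym_sub k \<and> g' k \<in> trace_kernel sc br"
    using g(1) subsp_zero[OF sym_sub_subsp] subsp_zero[OF TK_subsp] by (auto simp: g'_def)
  ultimately show "f \<in> Gd n" using g(2) unfolding Gd_def by auto
qed

definition Good :: "('g list \<Rightarrow> 'k) set" where "Good = {c. \<exists>K. c \<in> Gd K}"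

lemma Good_subsp: "subsp Good"
  unfolding subsp_def Good_def
proof (intro conjI ballI allI)
  show "(\<lambda>_. 0) \<in> {c. \<exists>K. c \<in> Gd K}" using subsp_zero[OF Gd_subsp] by blast
next
  fix f g assume "f \<in> {c. \<exists>K. c \<in> Gd K}" "g \<in> {c. \<exists>K. c \<in> Gd K}"
  then obtain K1 K2 where "f \<in> Gd K1" "g \<in> Gd K2" by blast
  then have "f \<in> Gd (max K1 K2)" "g \<in> Gd (max K1 K2)" using Gd_mono[of K1 "max K1 K2"] Gd_mono[of K2 "max K1 K2"] by auto
  then show "fadd f g \<in> {c. \<exists>K. c \<in> Gd K}" using subsp_add[OF Gd_subsp] by blast
next
  fix c f assume "f \<in> {c. \<exists>K. c \<in> Gd K}"
  then show "fscale c f \<in> {c. \<exists>K. c \<in> Gd K}" using subsp_scale[OF Gd_subsp] by blast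
qed

lemma ad_C: fixes x :: 'g and f :: "'g list \<Rightarrow> 'k" shows "f \<in> fin_supp \<Longrightarrow> ad x f \<in> comm_span"
proof -
  assume f: "f \<in> fin_supp"
  have "ad x f = fsub (wmult (WL [x]) f) (wmult f (WL [x]))" by (simp add: ad_def wmult_wd_left wmult_wd_right)
  moreover have "WL [x] \<in> fin_supp" by simp
  ultimately show ?thesis unfolding comm_span_def using f
    by (intro fspan_base CollectI exI[of _ "WL [x]"] exI[of _ f] conjI) simp_all
qed

lemma comm1: "fsub (WL (x # y)) (WL (y @ [x])) \<in> Good"
proof -
  let ?n = "length y"
  obtain g where g: "\<forall>k\<le>?n. g k \<in> sym_sub k" "fsub (WL y) (fsum g {..?n}) \<in> ue_ideal sc br"
    using wd_Sp[of y ?n] unfolding Sp_def by blast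
  have "\<forall>k\<le>?n. \<exists>h. h \<in> sym_sub k \<and> fsub (ad x (g k)) h \<in> ue_ideal sc br"
    using g(1) ad_sym by blast
  then obtain h where h: "\<forall>k\<le>?n. h k \<in> sym_sub k \<and> fsub (ad x (g k)) (h k) \<in> ue_ideal sc br"
    by metis
  have hTK: "h k \<in> trace_kernel sc br" if k: "k \<le> ?n" for k
  proof -
    have gf: "g k \<in> fin_supp" using g(1) k sym_sub_Hom by (auto simp: Hom_def)
    have "h k = fsub (ad x (g k)) (fsub (ad x (g k)) (h k))" by (rule ext) (simp add: fapps)
    then show ?thesis
      using subsp_sub[OF TK_subsp C_TK[OF ad_C[OF gf, where x=x]] I_TK[OF h[rule_format, OF k, THEN conjunct2]]] by simp
  qed
  have A: "ad x (fsub (WL y) (fsum g {..?n})) \<in> ue_ideal sc br" by (rule ad_I[OF g(2)])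
  have B: "fsum (\<lambda>k. fsub (ad x (g k)) (h k)) {..?n} \<in> ue_ideal sc br"
    by (rule subsp_fsum[OF ideal_subsp]) (use h in auto)
  have "fsub (fsub (WL (x # y)) (WL (y @ [x]))) (fsum h {..?n}) = fadd (ad x (fsub (WL y) (fsum g {..?n}))) (fsum (\<lambda>k. fsub (ad x (g k)) (h k)) {..?n})"
    by (rule ext) (simp add: ad_lin ad_wd fapps sum_subtractf)
  then have "fsub (fsub (WL (x # y)) (WL (y @ [x]))) (fsum h {..?n}) \<in> ue_ideal sc br"
    using subsp_add[OF ideal_subsp A B] by simp
  then have "fsub (WL (x # y)) (WL (y @ [x])) \<in> Gd ?n" unfolding Gd_def using h hTK by blast
  then show ?thesis unfolding Good_def by blast
qed

lemma comm_words: "fsub (WL (u @ v)) (WL (v @ u)) \<in> Good"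
proof (induction u arbitrary: v)
  case Nil
  have "fsub (WL ([] @ v)) (WL (v @ [])) = (\<lambda>_. 0)" by (rule ext) (simp add: fapps)
  then show ?case using subsp_zero[OF Good_subsp] by simp
next
  case (Cons x u)
  have 1: "fsub (WL (x # (u @ v))) (WL ((u @ v) @ [x])) \<in> Good" by (rule comm1)
  have 2: "fsub (WL (u @ (v @ [x]))) (WL ((v @ [x]) @ u)) \<in> Good" by (rule Cons.IH)
  have "fsub (WL ((x # u) @ v)) (WL (v @ x # u)) = fadd (fsub (WL (x # (u @ v))) (WL ((u @ v) @ [x]))) (fsub (WL (u @ (v @ [x]))) (WL ((v @ [x]) @ u)))"
    by (rule ext) (simp add: fapps)
  then show ?case using subsp_add[OF Good_subsp 1 2] by simp
qed

lemma C_Good: "comm_span \<subseteq> Good"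
  unfolding comm_span_def
proof (rule fspan_min[OF Good_subsp], rule subsetI)
  fix c :: "'g list \<Rightarrow> 'k" assume "c \<in> {fsub (wmult a b) (wmult b a) |a b. a \<in> fin_supp \<and> b \<in> fin_supp}"
  then obtain a b where c: "c = fsub (wmult a b) (wmult b a)" and a: "a \<in> fin_supp" and b: "b \<in> fin_supp" by blast
  let ?A = "{u. a u \<noteq> 0}" and ?B = "{v. b v \<noteq> 0}"
  have fin: "finite ?A" "finite ?B" using a b by (auto simp: fin_supp_def)
  have "c = fsum (\<lambda>u. fscale (a u) (fsum (\<lambda>v. fscale (b v) (fsub (WL (u @ v)) (WL (v @ u)))) ?B)) ?A"
  proof (rule ext)
    fix w
    show "c w = fsum (\<lambda>u. fscale (a u) (fsum (\<lambda>v. fscale (b v) (fsub (WL (u @ v)) (WL (v @ u)))) ?B)) ?A w"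
      unfolding c wmult_expand[OF a b] wmult_expand[OF b a]
      by (simp add: fapps sum_subtractf right_diff_distrib sum_distrib_left sum.swap[of _ ?A] mult.left_commute)
  qed
  also have "\<dots> \<in> Good"
    by (intro subsp_fsum[OF Good_subsp] subsp_scale[OF Good_subsp] fin comm_words)
  finally show "c \<in> Good" .
qed

lemma part2:
  assumes D: "\<And>N (f :: nat \<Rightarrow> 'g list \<Rightarrow> 'k). (\<forall>m\<le>N. f m \<in> sym_sub m) \<Longrightarrow> fsum f {..N} \<in> ue_ideal sc br \<Longrightarrow> \<forall>m\<le>N. f m \<in> ue_ideal sc br"
    and f: "\<forall>m\<le>N. f m \<in> sym_sub m" and TK: "fsum f {..N} \<in> trace_kernel sc br"
  shows "\<forall>m\<le>N. f m \<in> trace_kernel sc br"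
proof -
  obtain i c where ic: "fsum f {..N} = fadd i c" "i \<in> ue_ideal sc br" "c \<in> comm_span"
    using TK unfolding trace_kernel_def set_plus_f_def by blast
  obtain K where "c \<in> Gd K" using C_Good ic(3) unfolding Good_def by blast
  then obtain h where h: "\<forall>k\<le>K. h k \<in> sym_sub k \<and> h k \<in> trace_kernel sc br" "fsub c (fsum h {..K}) \<in> ue_ideal sc br"
    unfolding Gd_def by blast
  define L where "L = max N K"
  define f' where "f' m = (if m \<le> N then f m else (\<lambda>_. 0))" for m
  define h' where "h' m = (if m \<le> K then h m else (\<lambda>_. 0))" for m
  define d where "d m = fsub (f' m) (h' m)" for m
  have d_sym: "\<forall>m\<le>L. d m \<in> sym_sub m"
  proof (intro allI impI)
    fix m assume "m \<le> L"
    have z: "((\<lambda>_. 0) :: 'g list \<Rightarrow> 'k) \<in> sym_sub m" by (rule subsp_zero[OF sym_sub_subsp])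
    have "f' m \<in> sym_sub m" using f z by (simp add: f'_def)
    moreover have "h' m \<in> sym_sub m" using h(1) z by (simp add: h'_def)
    ultimately show "d m \<in> sym_sub m" unfolding d_def by (rule subsp_sub[OF sym_sub_subsp])
  qed
  have sf: "fsum f' {..L} = fsum f {..N}"
  proof (rule ext)
    fix w
    have "(\<Sum>k\<le>L. f' k w) = (\<Sum>k\<le>N. f' k w)" by (rule sum.mono_neutral_right) (auto simp: f'_def L_def)
    then show "fsum f' {..L} w = fsum f {..N} w" by (simp add: fapps f'_def)
  qed
  have sh': "fsum h' {..L} = fsum h {..K}"
  proof (rule ext)
    fix w
    have "(\<Sum>k\<le>L. h' k w) = (\<Sum>k\<le>K. h' k w)" by (rule sum.mono_neutral_right) (auto simp: h'_def L_def)
    then show "fsum h' {..L} w = fsum h {..K} w" by (simp add: fapps h'_def)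
  qed
  have "fsum d {..L} = fadd i (fsub c (fsum h {..K}))"
  proof (rule ext)
    fix w
    have "fsum d {..L} w = fsum f' {..L} w - fsum h' {..L} w" by (simp add: d_def fapps sum_subtractf)
    then show "fsum d {..L} w = fadd i (fsub c (fsum h {..K})) w"
      using fun_cong[OF ic(1), of w] by (simp add: sf sh' fapps)
  qed
  then have "fsum d {..L} \<in> ue_ideal sc br" using subsp_add[OF ideal_subsp ic(2) h(2)] by simp
  then have dI: "\<forall>m\<le>L. d m \<in> ue_ideal sc br" using D[OF d_sym] by blast
  show ?thesis
  proof (intro allI impI)
    fix m assume m: "m \<le> N"
    have "f m = fadd (d m) (h' m)" by (rule ext) (simp add: d_def f'_def m fapps)
    moreover have "h' m \<in> trace_kernel sc br" using h(1) subsp_zero[OF TK_subsp] by (auto simp: h'_def)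
    moreover have "d m \<in> trace_kernel sc br" using dI m by (auto simp: L_def intro: I_TK)
    ultimately show "f m \<in> trace_kernel sc br" using subsp_add[OF TK_subsp] by simp
  qed
qed

end


theorem theorem3p1:
  fixes sc :: "'k::field_char_0 \<Rightarrow> 'g::ab_group_add \<Rightarrow> 'g"
    and br :: "'g \<Rightarrow> 'g \<Rightarrow> 'g"
  assumes "lie_algebra sc br"
  shows "(\<forall>v \<in> (fin_supp :: ('g list \<Rightarrow> 'k) set). \<exists>N f.
            (\<forall>m\<le>N. f m \<in> sym_sub m) \<and> fsub v (fsum f {..N}) \<in> trace_kernel sc br)
       \<and> (\<forall>N (f :: nat \<Rightarrow> 'g list \<Rightarrow> 'k).
            (\<forall>m\<le>N. f m \<in> sym_sub m) \<and> fsum f {..N} \<in> trace_kernel sc br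
              \<longrightarrow> (\<forall>m\<le>N. f m \<in> trace_kernel sc br))"
proof -
  have mod: "module sc" using assms by (simp add: lie_algebra_def)
  then have vs: "vector_space sc" by (simp add: module_iff_vector_space)
  obtain B where B0: "B \<subseteq> UNIV" and B: "\<not> module.dependent sc B" "UNIV \<subseteq> module.span sc B"
    and B3: "card B = vector_space.dim sc (UNIV :: 'g set)"
    by (rule vector_space.basis_exists[OF vs, of UNIV])
  have "\<exists>r::'g rel. Well_order r \<and> Field r = UNIV" by (rule well_ordering)
  then obtain r :: "'g rel" where r0: "Well_order r \<and> Field r = UNIV" by (elim exE)
  have r: "Well_order r" "Field r = UNIV" using r0 by (rule conjunct1, rule conjunct2)
  define lt where "lt a b \<longleftrightarrow> (a, b) \<in> r \<and> a \<noteq> b" for a b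
  have lin: "linear_order r" using r by (simp add: well_order_on_def)
  have tr: "trans r" using lin by (simp add: linear_order_on_def partial_order_on_def preorder_on_def)
  have an: "antisym r" using lin by (simp add: linear_order_on_def partial_order_on_def)
  have tot: "total_on UNIV r" using lin r(2) by (simp add: linear_order_on_def)
  have "pbw sc br B lt"
  proof
    show "lie_algebra sc br" by (rule assms)
    show "\<not> module.dependent sc B" by (rule B(1))
    show "module.span sc B = UNIV" using B(2) by blast
    show "\<not> lt a a" for a by (simp add: lt_def)
    show "lt a c" if "lt a b" "lt b c" for a b c
    proof -
      have ab: "(a, b) \<in> r" "a \<noteq> b" and bc: "(b, c) \<in> r" "b \<noteq> c" using that by (auto simp: lt_def)
      have "(a, c) \<in> r" using tr ab bc by (meson transD)
      moreover have "a \<noteq> c"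
      proof
        assume "a = c"
        then have "(b, a) \<in> r" using bc by simp
        then show False using an ab by (meson antisymD)
      qed
      ultimately show ?thesis by (simp add: lt_def)
    qed
    show "lt a b \<or> lt b a" if "a \<noteq> b" for a b
      using tot that by (auto simp: lt_def total_on_def)
  qed
  then interpret P: pbw sc br B lt .
  show ?thesis
  proof (intro conjI ballI allI impI)
    fix v :: "'g list \<Rightarrow> 'k" assume "v \<in> fin_supp"
    then show "\<exists>N f. (\<forall>m\<le>N. f m \<in> sym_sub m) \<and> fsub v (fsum f {..N}) \<in> trace_kernel sc br"
      by (rule part1)
  next
    fix N m and f :: "nat \<Rightarrow> 'g list \<Rightarrow> 'k"
    assume a: "(\<forall>m\<le>N. f m \<in> sym_sub m) \<and> fsum f {..N} \<in> trace_kernel sc br" and m: "m \<le> N"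
    have "\<forall>m\<le>N. f m \<in> trace_kernel sc br"
      by (rule part2[OF P.Dlem]) (use a in blast)+
    then show "f m \<in> trace_kernel sc br" using m by blast
  qed
qed


end
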